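(* Let $\mathfrak{g}=\mathfrak{so}_{2r+1}$, $r\geqslant 3$, with root system $\{\pm\varepsilon_i\pm\varepsilon_j,\pm\varepsilon_i\}$, positive roots $\{\varepsilon_i\pm\varepsilon_j\ (i<j),\ \varepsilon_k\}$, simple roots $\alpha_1,\dots,\alpha_r$ (Bourbaki numbering), and fix a Chevalley basis with root vectors $e_\alpha$. Let $\theta$ be the highest root, $\theta_2$ the highest root of the subsystem generated by $\alpha_3,\dots,\alpha_r$, $\beta_1=\alpha_2$, $\delta_1=\alpha_1+\alpha_2+\alpha_3$, $\beta_2=\alpha_2+\alpha_3$, $\delta_2=\alpha_1+\alpha_2$, and $$w_2=e_\theta e_{\theta_2}-\sum_{j=1}^2 e_{\beta_j+\theta_2}e_{\delta_j+\theta_2}\in S^2(\mathfrak{g}).$$ Let $W_2\subset S^2(\mathfrak{g})$ be the $\mathfrak{g}$-submodule (under the adjoint action) generated by $w_2$, and let $V(W_2)\subset\mathfrak{g}^*\cong\mathfrak{g}$ be the zero locus of the ideal of $S(\mathfrak{g})$ generated by $W_2$. Let $\mathcal{N}$ be the nilpotent cone of $\mathfrak{g}$. Then $V(W_2)\cap\mathcal{N}\subset\overline{\mathbb{O}_{(3,1^{2r-2})}}$.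
   Context: $w_2$ is a highest weight vector for the adjoint action, generating an irreducible module $W_2$ of highest weight $\theta+\theta_2$. $\mathbb{O}_{(3,1^{2r-2})}$ denotes the nilpotent orbit of $\mathfrak{so}_{2r+1}$ with Jordan type $(3,1^{2r-2})$ in the natural representation; $\mathfrak{g}^*$ is identified with $\mathfrak{g}$ via the normalized invariant form. *)

theory Defs
  imports Complex_Main "HOL-Library.Function_Algebras" "Jordan_Normal_Form.Jordan_Normal_Form"
begin

text \<open>The index of the weight vector of weight eps_i (1 <= i <= r)
  is i - 1, that of weight -eps_i is 2r + 1 - i, and the zero weight vector has index r.
  The Cartan subalgebra is the diagonal one.\<close>

definition nat_dim :: "nat \<Rightarrow> nat" where
  "nat_dim r = 2 * r + 1"

definition Jform :: "nat \<Rightarrow> complex mat" where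
  "Jform r = mat (nat_dim r) (nat_dim r) (\<lambda>(p, q). if p + q = 2 * r then 1 else 0)"

definition so_alg :: "nat \<Rightarrow> complex mat set" where
  "so_alg r = {X \<in> carrier_mat (nat_dim r) (nat_dim r).
                 transpose_mat X * Jform r = - (Jform r * X)}"

definition lie_bracket :: "complex mat \<Rightarrow> complex mat \<Rightarrow> complex mat" where
  "lie_bracket X Y = X * Y - Y * X"

text \<open>Normalized invariant form on so(2r+1) (long roots have square length 2):
  (X, Y) = tr(XY) / 2.\<close>
definition mat_trace :: "complex mat \<Rightarrow> complex" where
  "mat_trace X = (\<Sum>i<dim_row X. X $$ (i, i))"

definition inv_form :: "complex mat \<Rightarrow> complex mat \<Rightarrow> complex" where
  "inv_form X Y = mat_trace (X * Y) / 2"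

definition unit_mat :: "nat \<Rightarrow> nat \<Rightarrow> nat \<Rightarrow> complex mat" where
  "unit_mat n a b = mat n n (\<lambda>(p, q). if p = a \<and> q = b then 1 else 0)"

definition pos_idx :: "nat \<Rightarrow> nat \<Rightarrow> nat" where "pos_idx r i = i - 1"
definition neg_idx :: "nat \<Rightarrow> nat \<Rightarrow> nat" where "neg_idx r i = 2 * r + 1 - i"
definition mid_idx :: "nat \<Rightarrow> nat" where "mid_idx r = r"

text \<open>Weights are integer vectors in epsilon-coordinates, i.e. functions nat => int
  (coordinate i = coefficient of eps_i).\<close>

definition eps :: "nat \<Rightarrow> nat \<Rightarrow> int" where
  "eps i = (\<lambda>k. if k = i then 1 else 0)"

definition simple_root :: "nat \<Rightarrow> nat \<Rightarrow> nat \<Rightarrow> int" where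
  "simple_root r k = (if k < r then eps k - eps (k + 1) else eps r)"

text \<open>Positive root vectors of the fixed Chevalley basis:
   e_(eps_i - eps_j) = E(i,j) - E(-j,-i)                 (i < j)
   e_(eps_i + eps_j) = s_ij (E(i,-j) - E(j,-i))          (i < j), s_23 = -1, s_ij = 1 otherwise
   e_(eps_i)         = sqrt 2 (E(i,0) - E(0,-i)).
  Together with e_(-(eps_i - eps_j)) = E(j,i) - E(-i,-j),
  e_(-(eps_i + eps_j)) = s_ij (E(-j,i) - E(-i,j)), e_(-eps_i) = sqrt 2 (E(0,i) - E(-i,0))
  this is a Chevalley basis; the sign s_23 is chosen so that w_2 is a highest weight vector.\<close>

definition e_minus :: "nat \<Rightarrow> nat \<Rightarrow> nat \<Rightarrow> complex mat" where
  "e_minus r i j = unit_mat (nat_dim r) (pos_idx r i) (pos_idx r j)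
                 - unit_mat (nat_dim r) (neg_idx r j) (neg_idx r i)"

definition e_plus :: "nat \<Rightarrow> nat \<Rightarrow> nat \<Rightarrow> complex mat" where
  "e_plus r i j = (if (i, j) = (2, 3) then -1 else 1) \<cdot>\<^sub>m
                 (unit_mat (nat_dim r) (pos_idx r i) (neg_idx r j)
                 - unit_mat (nat_dim r) (pos_idx r j) (neg_idx r i))"

definition e_short :: "nat \<Rightarrow> nat \<Rightarrow> complex mat" where
  "e_short r i = complex_of_real (sqrt 2) \<cdot>\<^sub>m
                 (unit_mat (nat_dim r) (pos_idx r i) (mid_idx r)
                 - unit_mat (nat_dim r) (mid_idx r) (neg_idx r i))"

text \<open>Root vector e_alpha for a positive root alpha of B_r (0 for non-roots; never used).\<close>
definition root_vec :: "nat \<Rightarrow> (nat \<Rightarrow> int) \<Rightarrow> complex mat" where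
  "root_vec r \<alpha> =
    (if \<exists>i j. 1 \<le> i \<and> i < j \<and> j \<le> r \<and> \<alpha> = eps i - eps j then
       (case (SOME (i, j). 1 \<le> i \<and> i < j \<and> j \<le> r \<and> \<alpha> = eps i - eps j) of (i, j) \<Rightarrow> e_minus r i j)
     else if \<exists>i j. 1 \<le> i \<and> i < j \<and> j \<le> r \<and> \<alpha> = eps i + eps j then
       (case (SOME (i, j). 1 \<le> i \<and> i < j \<and> j \<le> r \<and> \<alpha> = eps i + eps j) of (i, j) \<Rightarrow> e_plus r i j)
     else if \<exists>i. 1 \<le> i \<and> i \<le> r \<and> \<alpha> = eps i then
       e_short r (SOME i. 1 \<le> i \<and> i \<le> r \<and> \<alpha> = eps i)
     else 0\<^sub>m (nat_dim r) (nat_dim r))"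

text \<open>theta = highest root of B_r = eps_1 + eps_2.  theta_2 = highest root of the subsystem
  generated by alpha_3, ..., alpha_r (of type B_(r-2) on eps_3, ..., eps_r): this is
  eps_3 + eps_4 if r >= 4, and eps_3 = alpha_3 if r = 3 (type A_1).\<close>
definition theta :: "nat \<Rightarrow> nat \<Rightarrow> int" where
  "theta r = eps 1 + eps 2"

definition theta2 :: "nat \<Rightarrow> nat \<Rightarrow> int" where
  "theta2 r = (if r = 3 then eps 3 else eps 3 + eps 4)"

definition beta1 :: "nat \<Rightarrow> nat \<Rightarrow> int" where "beta1 r = simple_root r 2"
definition delta1 :: "nat \<Rightarrow> nat \<Rightarrow> int" where
  "delta1 r = simple_root r 1 + simple_root r 2 + simple_root r 3"
definition beta2 :: "nat \<Rightarrow> nat \<Rightarrow> int" where "beta2 r = simple_root r 2 + simple_root r 3"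
definition delta2 :: "nat \<Rightarrow> nat \<Rightarrow> int" where "delta2 r = simple_root r 1 + simple_root r 2"

text \<open>An element of S^2(g) is represented by a formal sum  sum_k c_k a_k b_k  (a_k, b_k in g),
  encoded as a list of triples (c_k, a_k, b_k).  Such an element is a quadratic polynomial
  function on g^* = g (identification by inv_form), evaluated by s2_eval.
  Since S(g) = C[g^*] faithfully, this represents S^2(g) faithfully up to this evaluation.\<close>

type_synonym s2 = "(complex \<times> complex mat \<times> complex mat) list"

definition s2_eval :: "s2 \<Rightarrow> complex mat \<Rightarrow> complex" where
  "s2_eval L x = (\<Sum>(c, a, b)\<leftarrow>L. c * inv_form a x * inv_form b x)"

definition s2_act :: "complex mat \<Rightarrow> s2 \<Rightarrow> s2" where
  "s2_act \<xi> L = concat (map (\<lambda>(c, a, b). [(c, lie_bracket \<xi> a, b), (c, a, lie_bracket \<xi> b)]) L)"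

definition s2_smult :: "complex \<Rightarrow> s2 \<Rightarrow> s2" where
  "s2_smult k L = map (\<lambda>(c, a, b). (k * c, a, b)) L"

definition w2 :: "nat \<Rightarrow> s2" where
  "w2 r = [(1, root_vec r (theta r), root_vec r (theta2 r)),
           (-1, root_vec r (beta1 r + theta2 r), root_vec r (delta1 r + theta2 r)),
           (-1, root_vec r (beta2 r + theta2 r), root_vec r (delta2 r + theta2 r))]"

inductive_set W2 :: "nat \<Rightarrow> s2 set" for r where
  gen: "w2 r \<in> W2 r"
| zero: "[] \<in> W2 r"
| add: "L \<in> W2 r \<Longrightarrow> M \<in> W2 r \<Longrightarrow> L @ M \<in> W2 r"
| smult: "L \<in> W2 r \<Longrightarrow> s2_smult k L \<in> W2 r"
| act: "L \<in> W2 r \<Longrightarrow> \<xi> \<in> so_alg r \<Longrightarrow> s2_act \<xi> L \<in> W2 r"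

text \<open>Zero locus in g^* = g of the ideal of S(g) generated by W_2.  The zero set of an ideal
  generated by a set of polynomials is the common zero set of the generators.\<close>
definition zero_locus_W2 :: "nat \<Rightarrow> complex mat set" where
  "zero_locus_W2 r = {x \<in> so_alg r. \<forall>L \<in> W2 r. s2_eval L x = 0}"

definition nilcone :: "nat \<Rightarrow> complex mat set" where
  "nilcone r = {x \<in> so_alg r. \<exists>k. x ^\<^sub>m k = 0\<^sub>m (nat_dim r) (nat_dim r)}"

definition orbit_3_1 :: "nat \<Rightarrow> complex mat set" where
  "orbit_3_1 r = {x \<in> so_alg r. jordan_nf x ((3, 0) # replicate (2 * r - 2) (1, 0))}"

definition mat_closure :: "nat \<Rightarrow> complex mat set \<Rightarrow> complex mat set" where
  "mat_closure n S = {x \<in> carrier_mat n n. \<forall>\<epsilon>>0. \<exists>y\<in>S.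
       \<forall>i<n. \<forall>j<n. cmod (x $$ (i, j) - y $$ (i, j)) < \<epsilon>}"

end

theory Submission
  imports Defs
begin

lemma mult_idx:
  assumes "M \<in> carrier_mat n n" "N \<in> carrier_mat n n" "i < n" "j < n"
  shows "(M * N) $$ (i,j) = (\<Sum>k<n. M $$ (i,k) * N $$ (k,j))"
proof -
  have "(M * N) $$ (i,j) = row M i \<bullet> col N j" using assms by simp
  also have "\<dots> = (\<Sum>k\<in>{0..<n}. row M i $ k * col N j $ k)" using assms by (simp add: scalar_prod_def)
  also have "\<dots> = (\<Sum>k<n. M $$ (i,k) * N $$ (k,j))" using assms
    by (auto simp: atLeast0LessThan intro!: sum.cong)
  finally show ?thesis .
qed

lemma unit_mat_carrier[simp]: "unit_mat n a b \<in> carrier_mat n n"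
  unfolding unit_mat_def by simp

lemma unit_mat_index: "i < n \<Longrightarrow> j < n \<Longrightarrow> unit_mat n a b $$ (i,j) = (if i = a \<and> j = b then 1 else 0)"
  unfolding unit_mat_def by simp

lemma unit_mult_index:
  assumes M: "M \<in> carrier_mat n n" and i: "i < n" and j: "j < n" and b: "b < n"
  shows "(unit_mat n a b * M) $$ (i,j) = (if i = a then M $$ (b,j) else 0)"
proof -
  have "(unit_mat n a b * M) $$ (i,j) = (\<Sum>k<n. unit_mat n a b $$ (i,k) * M $$ (k,j))"
    by (rule mult_idx) (simp_all add: M i j)
  also have "\<dots> = (\<Sum>k<n. if k = b then (if i = a then M $$ (b,j) else 0) else 0)"
    by (rule sum.cong) (auto simp: unit_mat_index i)
  also have "\<dots> = (if i = a then M $$ (b,j) else 0)" using b by simp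
  finally show ?thesis .
qed

lemma mult_unit_index:
  assumes M: "M \<in> carrier_mat n n" and i: "i < n" and j: "j < n" and a: "a < n"
  shows "(M * unit_mat n a b) $$ (i,j) = (if j = b then M $$ (i,a) else 0)"
proof -
  have "(M * unit_mat n a b) $$ (i,j) = (\<Sum>k<n. M $$ (i,k) * unit_mat n a b $$ (k,j))"
    by (rule mult_idx) (simp_all add: M i j)
  also have "\<dots> = (\<Sum>k<n. if k = a then (if j = b then M $$ (i,a) else 0) else 0)"
    by (rule sum.cong) (auto simp: unit_mat_index j)
  also have "\<dots> = (if j = b then M $$ (i,a) else 0)" using a by simp
  finally show ?thesis .
qed

lemma Jform_carrier[simp]: "Jform r \<in> carrier_mat (nat_dim r) (nat_dim r)"
  unfolding Jform_def by simp

lemma dim_Jform[simp]: "dim_row (Jform r) = nat_dim r" "dim_col (Jform r) = nat_dim r"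
  unfolding Jform_def by simp_all

lemma J_mult_index:
  assumes M: "M \<in> carrier_mat (nat_dim r) (nat_dim r)" and i: "i < nat_dim r" and j: "j < nat_dim r"
  shows "(Jform r * M) $$ (i,j) = M $$ (2*r - i, j)"
proof -
  let ?n = "nat_dim r"
  have "(Jform r * M) $$ (i,j) = (\<Sum>k<?n. Jform r $$ (i,k) * M $$ (k,j))"
    by (rule mult_idx) (simp_all add: M i j)
  also have "\<dots> = (\<Sum>k<?n. if k = 2*r - i then M $$ (2*r-i,j) else 0)"
    by (rule sum.cong) (use i in \<open>auto simp: Jform_def nat_dim_def\<close>)
  also have "\<dots> = M $$ (2*r - i, j)" using i by (simp add: nat_dim_def)
  finally show ?thesis .
qed

lemma mult_J_index:
  assumes M: "M \<in> carrier_mat (nat_dim r) (nat_dim r)" and i: "i < nat_dim r" and j: "j < nat_dim r"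
  shows "(M * Jform r) $$ (i,j) = M $$ (i, 2*r - j)"
proof -
  let ?n = "nat_dim r"
  have "(M * Jform r) $$ (i,j) = (\<Sum>k<?n. M $$ (i,k) * Jform r $$ (k,j))"
    by (rule mult_idx) (simp_all add: M i j)
  also have "\<dots> = (\<Sum>k<?n. if k = 2*r - j then M $$ (i, 2*r-j) else 0)"
    by (rule sum.cong) (use j in \<open>auto simp: Jform_def nat_dim_def\<close>)
  also have "\<dots> = M $$ (i, 2*r - j)" using j by (simp add: nat_dim_def)
  finally show ?thesis .
qed

definition AA :: "nat \<Rightarrow> complex mat \<Rightarrow> nat \<Rightarrow> nat \<Rightarrow> complex" where
  "AA r x a b = x $$ (2*r - a, b)"

lemma so_alg_iff:
  "x \<in> so_alg r \<longleftrightarrow> x \<in> carrier_mat (nat_dim r) (nat_dim r) \<and>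
     (\<forall>a < nat_dim r. \<forall>b < nat_dim r. AA r x a b = - AA r x b a)"
proof -
  let ?n = "nat_dim r"
  { assume x: "x \<in> carrier_mat ?n ?n"
    have c1: "transpose_mat x * Jform r \<in> carrier_mat ?n ?n" using x by simp
    have c2: "- (Jform r * x) \<in> carrier_mat ?n ?n" using x by (simp add: mult_carrier_mat[OF Jform_carrier])
    have e1: "(transpose_mat x * Jform r) $$ (a,b) = AA r x b a" if a: "a < ?n" and b: "b < ?n" for a b
    proof -
      have "(transpose_mat x * Jform r) $$ (a,b) = transpose_mat x $$ (a, 2*r-b)"
        by (rule mult_J_index) (use x a b in auto)
      also have "\<dots> = x $$ (2*r-b, a)" using x a b by (simp add: nat_dim_def)
      finally show ?thesis by (simp add: AA_def)
    qed
    have e2: "(- (Jform r * x)) $$ (a,b) = - AA r x a b" if a: "a < ?n" and b: "b < ?n" for a b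
    proof -
      have "(- (Jform r * x)) $$ (a,b) = - ((Jform r * x) $$ (a,b))" using a b x by simp
      also have "(Jform r * x) $$ (a,b) = AA r x a b" unfolding AA_def by (rule J_mult_index[OF x a b])
      finally show ?thesis .
    qed
    have "transpose_mat x * Jform r = - (Jform r * x) \<longleftrightarrow>
       (\<forall>a < ?n. \<forall>b < ?n. AA r x a b = - AA r x b a)"
    proof
      assume h: "transpose_mat x * Jform r = - (Jform r * x)"
      show "\<forall>a < ?n. \<forall>b < ?n. AA r x a b = - AA r x b a"
      proof (intro allI impI)
        fix a b assume a: "a < ?n" and b: "b < ?n"
        have "(transpose_mat x * Jform r) $$ (b,a) = (- (Jform r * x)) $$ (b,a)" using h by simp
        then show "AA r x a b = - AA r x b a" using e1[OF b a] e2[OF b a] by simp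
      qed
    next
      assume h: "\<forall>a < ?n. \<forall>b < ?n. AA r x a b = - AA r x b a"
      show "transpose_mat x * Jform r = - (Jform r * x)"
      proof (rule eq_matI)
        fix a b assume a: "a < dim_row (- (Jform r * x))" and b: "b < dim_col (- (Jform r * x))"
        have a': "a < ?n" and b': "b < ?n" using a b c2 by auto
        show "(transpose_mat x * Jform r) $$ (a,b) = (- (Jform r * x)) $$ (a,b)"
          unfolding e1[OF a' b'] e2[OF a' b'] using h[rule_format, OF b' a'] by simp
      qed (use c1 c2 in auto)
    qed }
  then show ?thesis unfolding so_alg_def by blast
qed


lemma trace_mult_comm:
  assumes "M \<in> carrier_mat n n" "N \<in> carrier_mat n n"
  shows "mat_trace (M * N) = mat_trace (N * M)"
proof -
  have "mat_trace (M * N) = (\<Sum>i<n. (M * N) $$ (i,i))" unfolding mat_trace_def using assms by simp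
  also have "\<dots> = (\<Sum>i<n. \<Sum>k<n. M $$ (i,k) * N $$ (k,i))"
    by (rule sum.cong[OF refl], rule mult_idx) (use assms in auto)
  also have "\<dots> = (\<Sum>k<n. \<Sum>i<n. N $$ (k,i) * M $$ (i,k))"
    by (subst sum.swap) (simp add: mult.commute)
  also have "\<dots> = (\<Sum>i<n. (N * M) $$ (i,i))"
    by (rule sum.cong[OF refl], rule mult_idx[symmetric]) (use assms in auto)
  also have "\<dots> = mat_trace (N * M)" unfolding mat_trace_def using assms by simp
  finally show ?thesis .
qed

lemma trace_add: assumes "M \<in> carrier_mat n n" "N \<in> carrier_mat n n"
  shows "mat_trace (M + N) = mat_trace M + mat_trace N"
  using assms unfolding mat_trace_def by (simp add: sum.distrib)

lemma trace_minus: assumes "M \<in> carrier_mat n n" "N \<in> carrier_mat n n"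
  shows "mat_trace (M - N) = mat_trace M - mat_trace N"
  using assms unfolding mat_trace_def by (simp add: sum_subtractf)

lemma inv_form_add:
  assumes "a \<in> carrier_mat n n" "x \<in> carrier_mat n n" "y \<in> carrier_mat n n"
  shows "inv_form a (x + y) = inv_form a x + inv_form a y"
proof -
  have "a * (x + y) = a * x + a * y" using assms by (simp add: mult_add_distrib_mat)
  then show ?thesis unfolding inv_form_def using assms
    by (simp add: trace_add[of _ n] add_divide_distrib)
qed

lemma bracket_carrier[simp]:
  "x \<in> carrier_mat n n \<Longrightarrow> y \<in> carrier_mat n n \<Longrightarrow> lie_bracket x y \<in> carrier_mat n n"
  unfolding lie_bracket_def by (simp add: minus_carrier_mat)

lemma inv_form_bracket:
  assumes a: "a \<in> carrier_mat n n" and x: "x \<in> carrier_mat n n" and xi: "\<xi> \<in> carrier_mat n n"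
  shows "inv_form (lie_bracket \<xi> a) x = inv_form a (lie_bracket x \<xi>)"
proof -
  have "lie_bracket \<xi> a * x = \<xi> * (a * x) - a * (\<xi> * x)"
    unfolding lie_bracket_def using assms
    by (simp add: minus_mult_distrib_mat[OF mult_carrier_mat[OF xi a] mult_carrier_mat[OF a xi] x])
  hence 1: "mat_trace (lie_bracket \<xi> a * x) = mat_trace ((a * x) * \<xi>) - mat_trace (a * (\<xi> * x))"
    using assms by (simp add: trace_minus[of _ n] trace_mult_comm[of \<xi> n "a*x"])
  have "a * lie_bracket x \<xi> = (a * x) * \<xi> - a * (\<xi> * x)"
    unfolding lie_bracket_def using assms
    by (simp add: mult_minus_distrib_mat[OF a mult_carrier_mat[OF x xi] mult_carrier_mat[OF xi x]])
  hence 2: "mat_trace (a * lie_bracket x \<xi>) = mat_trace ((a * x) * \<xi>) - mat_trace (a * (\<xi> * x))"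
    using assms by (simp add: trace_minus[of _ n])
  show ?thesis unfolding inv_form_def using 1 2 by simp
qed

definition carr_list :: "nat \<Rightarrow> s2 \<Rightarrow> bool" where
  "carr_list n L = (\<forall>(c,a,b) \<in> set L. a \<in> carrier_mat n n \<and> b \<in> carrier_mat n n)"

lemma eval_act:
  assumes L: "carr_list n L" and x: "x \<in> carrier_mat n n" and xi: "\<xi> \<in> carrier_mat n n"
  shows "s2_eval (s2_act \<xi> L) x = s2_eval L (x + lie_bracket x \<xi>) - s2_eval L x - s2_eval L (lie_bracket x \<xi>)"
  using L
proof (induction L)
  case Nil
  then show ?case by (simp add: s2_eval_def s2_act_def)
next
  case (Cons t L)
  obtain c a b where t: "t = (c,a,b)" by (cases t) auto
  from Cons.prems have ab: "a \<in> carrier_mat n n" "b \<in> carrier_mat n n" and L': "carr_list n L"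
    unfolding carr_list_def t by auto
  note IH = Cons.IH[OF L']
  let ?y = "lie_bracket x \<xi>"
  have y: "?y \<in> carrier_mat n n" using x xi by simp
  have e1: "inv_form (lie_bracket \<xi> a) x = inv_form a ?y" by (rule inv_form_bracket[OF ab(1) x xi])
  have e2: "inv_form (lie_bracket \<xi> b) x = inv_form b ?y" by (rule inv_form_bracket[OF ab(2) x xi])
  have s1: "s2_eval (s2_act \<xi> (t # L)) x = c * inv_form a ?y * inv_form b x + c * inv_form a x * inv_form b ?y
       + s2_eval (s2_act \<xi> L) x"
    unfolding t s2_act_def s2_eval_def using e1 e2 by simp
  have s2: "\<And>z. s2_eval (t # L) z = c * inv_form a z * inv_form b z + s2_eval L z"
    unfolding t s2_eval_def by simp
  show ?case unfolding s1 s2 IH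
    using inv_form_add[OF ab(1) x y] inv_form_add[OF ab(2) x y]
    by (simp add: algebra_simps)
qed

lemma root_vec_carrier[simp]: "root_vec r \<alpha> \<in> carrier_mat (nat_dim r) (nat_dim r)"
  unfolding root_vec_def e_minus_def e_plus_def e_short_def
  by (auto split: prod.split simp: minus_carrier_mat)

lemma W2_carr: "L \<in> W2 r \<Longrightarrow> carr_list (nat_dim r) L"
proof (induction rule: W2.induct)
  case gen
  then show ?case unfolding w2_def carr_list_def by simp
next
  case zero
  then show ?case by (simp add: carr_list_def)
next
  case (add L M)
  then show ?case by (auto simp: carr_list_def)
next
  case (smult L k)
  then show ?case by (auto simp: carr_list_def s2_smult_def)
next
  case (act L \<xi>)
  have xi: "\<xi> \<in> carrier_mat (nat_dim r) (nat_dim r)" using act.hyps(2) by (simp add: so_alg_def)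
  show ?case using act.IH xi unfolding carr_list_def s2_act_def by fastforce
qed

lemma eval_smult: "s2_eval (s2_smult k L) x = k * s2_eval L x"
  unfolding s2_eval_def s2_smult_def
  by (induction L) (auto simp: algebra_simps)

lemma eval_append: "s2_eval (L @ M) x = s2_eval L x + s2_eval M x"
  unfolding s2_eval_def by simp


lemma dim_unit_mat[simp]: "dim_row (unit_mat n a b) = n" "dim_col (unit_mat n a b) = n"
  unfolding unit_mat_def by simp_all

definition SS :: "nat \<Rightarrow> complex mat \<Rightarrow> nat \<Rightarrow> nat \<Rightarrow> complex" where
  "SS r x a b = (AA r x a b - AA r x b a) / 2"

definition Pf :: "nat \<Rightarrow> complex mat \<Rightarrow> nat \<Rightarrow> nat \<Rightarrow> nat \<Rightarrow> nat \<Rightarrow> complex" where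
  "Pf r x i j k l = SS r x i j * SS r x k l - SS r x i k * SS r x j l + SS r x i l * SS r x j k"

definition xi :: "nat \<Rightarrow> nat \<Rightarrow> nat \<Rightarrow> complex mat" where
  "xi r p q = unit_mat (nat_dim r) p q - unit_mat (nat_dim r) (2*r - q) (2*r - p)"

lemma xi_carrier[simp]: "xi r p q \<in> carrier_mat (nat_dim r) (nat_dim r)"
  unfolding xi_def by (simp add: minus_carrier_mat)

lemma AA_xi:
  assumes p: "p < nat_dim r" and q: "q < nat_dim r" and a: "a < nat_dim r" and b: "b < nat_dim r"
  shows "AA r (xi r p q) a b = (if a = 2*r - p \<and> b = q then 1 else 0) - (if a = q \<and> b = 2*r - p then 1 else 0)"
proof -
  have a': "2*r - a < nat_dim r" by (simp add: nat_dim_def)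
  have "AA r (xi r p q) a b = (if 2*r-a = p \<and> b = q then 1 else 0) - (if 2*r-a = 2*r-q \<and> b = 2*r-p then 1 else 0)"
    unfolding AA_def xi_def using a' b by (simp add: unit_mat_index)
  moreover have "2*r - a = p \<longleftrightarrow> a = 2*r - p" using a p unfolding nat_dim_def by linarith
  moreover have "2*r - a = 2*r - q \<longleftrightarrow> a = q" using a q unfolding nat_dim_def by linarith
  ultimately show ?thesis by simp
qed

lemma xi_so:
  assumes p: "p < nat_dim r" and q: "q < nat_dim r"
  shows "xi r p q \<in> so_alg r"
  unfolding so_alg_iff
proof (intro conjI allI impI)
  fix a b assume a: "a < nat_dim r" and b: "b < nat_dim r"
  show "AA r (xi r p q) a b = - AA r (xi r p q) b a"
    unfolding AA_xi[OF p q a b] AA_xi[OF p q b a] conj_commute[of "b = _"] by simp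
qed simp

lemma AA_bracket:
  assumes x: "x \<in> carrier_mat (nat_dim r) (nat_dim r)" and p: "p < nat_dim r" and q: "q < nat_dim r"
    and a: "a < nat_dim r" and b: "b < nat_dim r"
  shows "AA r (lie_bracket x (xi r p q)) a b =
     (if b = q then AA r x a p else 0) - (if b = 2*r-p then AA r x a (2*r-q) else 0)
   - (if a = 2*r-p then AA r x (2*r-q) b else 0) + (if a = q then AA r x p b else 0)"
proof -
  let ?n = "nat_dim r"
  let ?U1 = "unit_mat ?n p q" and ?U2 = "unit_mat ?n (2*r - q) (2*r - p)"
  have a': "2*r - a < ?n" using a by (auto simp: nat_dim_def)
  have p': "2*r - p < ?n" and q': "2*r - q < ?n" by (auto simp: nat_dim_def)
  have U1: "?U1 \<in> carrier_mat ?n ?n" and U2: "?U2 \<in> carrier_mat ?n ?n" by auto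
  have e1: "x * xi r p q = x * ?U1 - x * ?U2"
    unfolding xi_def by (rule mult_minus_distrib_mat[OF x U1 U2])
  have e2: "xi r p q * x = ?U1 * x - ?U2 * x"
    unfolding xi_def by (rule minus_mult_distrib_mat[OF U1 U2 x])
  have "lie_bracket x (xi r p q) $$ (2*r - a, b)
     = (x * ?U1) $$ (2*r-a, b) - (x * ?U2) $$ (2*r-a, b) - ((?U1 * x) $$ (2*r-a, b) - (?U2 * x) $$ (2*r-a,b))"
    unfolding lie_bracket_def e1 e2 using a' b x by simp
  also have "\<dots> = (if b = q then x $$ (2*r-a, p) else 0) - (if b = 2*r-p then x $$ (2*r-a, 2*r-q) else 0)
      - ((if 2*r - a = p then x $$ (q, b) else 0) - (if 2*r-a = 2*r-q then x $$ (2*r-p, b) else 0))"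
    using mult_unit_index[OF x a' b p] mult_unit_index[OF x a' b q']
      unit_mult_index[OF x a' b q] unit_mult_index[OF x a' b p'] by simp
  also have "\<dots> = (if b = q then AA r x a p else 0) - (if b = 2*r-p then AA r x a (2*r-q) else 0)
   - (if a = 2*r-p then AA r x (2*r-q) b else 0) + (if a = q then AA r x p b else 0)"
    unfolding AA_def using a p q by (auto simp: nat_dim_def)
  finally show ?thesis unfolding AA_def .
qed

lemma SS_bracket:
  assumes x: "x \<in> carrier_mat (nat_dim r) (nat_dim r)" and p: "p < nat_dim r" and q: "q < nat_dim r"
    and a: "a < nat_dim r" and b: "b < nat_dim r"
  shows "SS r (lie_bracket x (xi r p q)) a b =
     (if b = q then SS r x a p else 0) - (if b = 2*r-p then SS r x a (2*r-q) else 0)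
   - (if a = 2*r-p then SS r x (2*r-q) b else 0) + (if a = q then SS r x p b else 0)"
  unfolding SS_def AA_bracket[OF x p q a b] AA_bracket[OF x p q b a]
  by (cases "b = q"; cases "b = 2*r-p"; cases "a = 2*r-p"; cases "a = q") (simp_all add: field_simps)

lemma SS_add:
  assumes "x \<in> carrier_mat (nat_dim r) (nat_dim r)" "y \<in> carrier_mat (nat_dim r) (nat_dim r)"
    "a < nat_dim r" "b < nat_dim r"
  shows "SS r (x + y) a b = SS r x a b + SS r y a b"
proof -
  have "2*r - a < nat_dim r" "2*r - b < nat_dim r" by (auto simp: nat_dim_def)
  then show ?thesis using assms unfolding SS_def AA_def by (simp add: field_simps)
qed

definition goodf :: "nat \<Rightarrow> (complex mat \<Rightarrow> complex) \<Rightarrow> bool" where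
  "goodf r f = (\<exists>L \<in> W2 r. \<forall>x \<in> carrier_mat (nat_dim r) (nat_dim r). s2_eval L x = f x)"

lemma goodf_D:
  assumes g: "goodf r f" and xi: "\<xi> \<in> so_alg r"
  shows "goodf r (\<lambda>x. f (x + lie_bracket x \<xi>) - f x - f (lie_bracket x \<xi>))"
proof -
  obtain L where L: "L \<in> W2 r" and e: "\<forall>x \<in> carrier_mat (nat_dim r) (nat_dim r). s2_eval L x = f x"
    using g unfolding goodf_def by blast
  have xic: "\<xi> \<in> carrier_mat (nat_dim r) (nat_dim r)" using xi unfolding so_alg_def by simp
  show ?thesis unfolding goodf_def
  proof (intro bexI ballI)
    show "s2_act \<xi> L \<in> W2 r" using L xi by (rule W2.act)
    fix x :: "complex mat" assume x: "x \<in> carrier_mat (nat_dim r) (nat_dim r)"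
    have y: "lie_bracket x \<xi> \<in> carrier_mat (nat_dim r) (nat_dim r)" using x xic by simp
    show "s2_eval (s2_act \<xi> L) x = f (x + lie_bracket x \<xi>) - f x - f (lie_bracket x \<xi>)"
      unfolding eval_act[OF W2_carr[OF L] x xic] using e x y by simp
  qed
qed

lemma goodf_smult: "goodf r f \<Longrightarrow> goodf r (\<lambda>x. c * f x)"
  unfolding goodf_def by (metis W2.smult eval_smult)

lemma goodf_cong: "goodf r f \<Longrightarrow> (\<And>x. x \<in> carrier_mat (nat_dim r) (nat_dim r) \<Longrightarrow> f x = g x) \<Longrightarrow> goodf r g"
  unfolding goodf_def by metis

lemma goodf_zero: "goodf r (\<lambda>x. 0)"
  unfolding goodf_def by (rule bexI[OF _ W2.zero]) (simp add: s2_eval_def)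

definition good :: "nat \<Rightarrow> nat \<Rightarrow> nat \<Rightarrow> nat \<Rightarrow> nat \<Rightarrow> bool" where
  "good r i j k l = goodf r (\<lambda>x. Pf r x i j k l)"

lemma good_neg: "goodf r (\<lambda>x. - f x) \<Longrightarrow> goodf r f"
  using goodf_smult[of r "\<lambda>x. - f x" "-1"] by simp

lemma sw12: "good r i j k l \<Longrightarrow> good r j i k l"
  unfolding good_def by (rule good_neg, rule goodf_cong, assumption) (simp add: Pf_def SS_def field_simps)
lemma sw23: "good r i j k l \<Longrightarrow> good r i k j l"
  unfolding good_def by (rule good_neg, rule goodf_cong, assumption) (simp add: Pf_def SS_def field_simps)
lemma sw34: "good r i j k l \<Longrightarrow> good r i j l k"
  unfolding good_def by (rule good_neg, rule goodf_cong, assumption) (simp add: Pf_def SS_def field_simps)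

lemma Pf_polar:
  assumes x: "x \<in> carrier_mat (nat_dim r) (nat_dim r)" and y: "y \<in> carrier_mat (nat_dim r) (nat_dim r)"
   and i: "i < nat_dim r" and j: "j < nat_dim r" and k: "k < nat_dim r" and l: "l < nat_dim r"
  shows "Pf r (x + y) i j k l - Pf r x i j k l - Pf r y i j k l =
     SS r x i j * SS r y k l + SS r y i j * SS r x k l
   - (SS r x i k * SS r y j l + SS r y i k * SS r x j l)
   + (SS r x i l * SS r y j k + SS r y i l * SS r x j k)"
  unfolding Pf_def using SS_add[OF x y] i j k l by (simp add: algebra_simps)


lemma good_D:
  assumes g: "good r i j k l" and p: "p < nat_dim r" and q: "q < nat_dim r"
    and i: "i < nat_dim r" and j: "j < nat_dim r" and k: "k < nat_dim r" and l: "l < nat_dim r"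
  shows "goodf r (\<lambda>x. SS r x i j * SS r (lie_bracket x (xi r p q)) k l + SS r (lie_bracket x (xi r p q)) i j * SS r x k l
   - (SS r x i k * SS r (lie_bracket x (xi r p q)) j l + SS r (lie_bracket x (xi r p q)) i k * SS r x j l)
   + (SS r x i l * SS r (lie_bracket x (xi r p q)) j k + SS r (lie_bracket x (xi r p q)) i l * SS r x j k))"
proof -
  have "goodf r (\<lambda>x. Pf r (x + lie_bracket x (xi r p q)) i j k l - Pf r x i j k l - Pf r (lie_bracket x (xi r p q)) i j k l)"
    using goodf_D[OF g[unfolded good_def] xi_so[OF p q]] .
  then show ?thesis
    by (rule goodf_cong) (rule Pf_polar, auto simp: i j k l)
qed

lemma move_in:
  assumes g: "good r i j k q" and q: "q < nat_dim r"
    and i: "i < nat_dim r" and j: "j < nat_dim r" and k: "k < nat_dim r"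
    and qr: "q \<noteq> r" and iq: "i \<noteq> q" "j \<noteq> q" "k \<noteq> q" and ir: "i \<noteq> r" "j \<noteq> r" "k \<noteq> r"
  shows "good r i j k r"
proof -
  have rn: "r < nat_dim r" by (simp add: nat_dim_def)
  have rr: "2 * r - r = r" by simp
  show ?thesis unfolding good_def
    using good_D[OF g rn q i j k q]
  proof (rule goodf_cong)
    fix x :: "complex mat" assume x: "x \<in> carrier_mat (nat_dim r) (nat_dim r)"
    note sb = SS_bracket[OF x rn q]
    show "SS r x i j * SS r (lie_bracket x (xi r r q)) k q + SS r (lie_bracket x (xi r r q)) i j * SS r x k q
      - (SS r x i k * SS r (lie_bracket x (xi r r q)) j q + SS r (lie_bracket x (xi r r q)) i k * SS r x j q)
      + (SS r x i q * SS r (lie_bracket x (xi r r q)) j k + SS r (lie_bracket x (xi r r q)) i q * SS r x j k)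
      = Pf r x i j k r"
      unfolding sb[OF k q] sb[OF i j] sb[OF j q] sb[OF i k] sb[OF j k] sb[OF i q] rr Pf_def
      using qr iq ir by simp
  qed
qed

lemma move_out:
  assumes g: "good r i j k r" and p: "p < nat_dim r"
    and i: "i < nat_dim r" and j: "j < nat_dim r" and k: "k < nat_dim r"
    and pr: "p \<noteq> r" and ir: "i \<noteq> r" "j \<noteq> r" "k \<noteq> r"
  shows "good r i j k p"
proof -
  have rn: "r < nat_dim r" by (simp add: nat_dim_def)
  have rr: "2 * r - r = r" by simp
  have pb: "2 * r - p \<noteq> r" using pr p by (auto simp: nat_dim_def)
  show ?thesis unfolding good_def
    using good_D[OF g p rn i j k rn]
  proof (rule goodf_cong)
    fix x :: "complex mat" assume x: "x \<in> carrier_mat (nat_dim r) (nat_dim r)"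
    note sb = SS_bracket[OF x p rn]
    show "SS r x i j * SS r (lie_bracket x (xi r p r)) k r + SS r (lie_bracket x (xi r p r)) i j * SS r x k r
      - (SS r x i k * SS r (lie_bracket x (xi r p r)) j r + SS r (lie_bracket x (xi r p r)) i k * SS r x j r)
      + (SS r x i r * SS r (lie_bracket x (xi r p r)) j k + SS r (lie_bracket x (xi r p r)) i r * SS r x j k)
      = Pf r x i j k p"
      unfolding sb[OF k rn] sb[OF i j] sb[OF j rn] sb[OF i k] sb[OF j k] sb[OF i rn] rr Pf_def
      using pr ir pb
      by (cases "i = 2*r - p"; cases "j = 2*r - p"; cases "k = 2*r - p") (simp_all add: SS_def field_simps)
  qed
qed

lemma good_dup:
  assumes "\<not> distinct [i,j,k,l]"
  shows "good r i j k l"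
proof -
  have "Pf r x i j k l = 0" for x
    using assms unfolding Pf_def SS_def by (auto simp: field_simps)
  then show ?thesis unfolding good_def by (intro goodf_cong[OF goodf_zero]) simp
qed


lemma chg:
  assumes g: "good r i j k l" and n: "i < nat_dim r" "j < nat_dim r" "k < nat_dim r" "l < nat_dim r" "p < nat_dim r"
    and ir: "i \<noteq> r" "j \<noteq> r" "k \<noteq> r" and l: "l \<noteq> i" "l \<noteq> j" "l \<noteq> k"
  shows "good r i j k p"
proof -
  have gr: "good r i j k r"
  proof (cases "l = r")
    case True then show ?thesis using g by simp
  next
    case False
    show ?thesis by (rule move_in[OF g n(4) n(1-3) False]) (use l ir in auto)
  qed
  show ?thesis
  proof (cases "p = r")
    case True then show ?thesis using gr by simp
  next
    case False then show ?thesis using move_out[OF gr n(5) n(1-3) False ir] by simp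
  qed
qed

lemma R1:
  assumes g: "good r i j k r" and n: "i < nat_dim r" "j < nat_dim r" "k < nat_dim r" "p < nat_dim r"
    and ir: "i \<noteq> r" "j \<noteq> r" "k \<noteq> r" and d: "i \<noteq> j" "i \<noteq> k" and pr: "p \<noteq> j" "p \<noteq> k" "p \<noteq> r"
  shows "good r p j k r"
proof (cases "p = i")
  case True then show ?thesis using g by simp
next
  case False
  have rn: "r < nat_dim r" by (simp add: nat_dim_def)
  have "good r i j k p" by (rule chg[OF g n(1-3) rn n(4) ir]) (use ir in auto)
  then have "good r j k p i" by (rule sw34[OF sw23[OF sw12]])
  then have "good r j k p r" by (rule chg[OF _ n(2,3,4,1) rn]) (use ir pr d False in auto)
  then show ?thesis by (rule sw12[OF sw23])
qed

lemma R2: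
  assumes g: "good r i j k r" and n: "i < nat_dim r" "j < nat_dim r" "k < nat_dim r" "p < nat_dim r"
    and ir: "i \<noteq> r" "j \<noteq> r" "k \<noteq> r" and d: "i \<noteq> j" "j \<noteq> k" and pr: "p \<noteq> i" "p \<noteq> k" "p \<noteq> r"
  shows "good r i p k r"
proof -
  have "good r j i k r" using g by (rule sw12)
  then have "good r p i k r" by (rule R1) (use n ir d pr in auto)
  then show ?thesis by (rule sw12)
qed

lemma R3:
  assumes g: "good r i j k r" and n: "i < nat_dim r" "j < nat_dim r" "k < nat_dim r" "p < nat_dim r"
    and ir: "i \<noteq> r" "j \<noteq> r" "k \<noteq> r" and d: "i \<noteq> k" "j \<noteq> k" and pr: "p \<noteq> i" "p \<noteq> j" "p \<noteq> r"
  shows "good r i j p r"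
proof -
  have "good r k i j r" using g by (rule sw12[OF sw23])
  then have "good r p i j r" by (rule R1) (use n ir d pr in auto)
  then show ?thesis by (rule sw23[OF sw12])
qed

lemma all_good:
  assumes r3: "r \<ge> 3" and base: "good r 0 1 2 r"
    and a: "a < nat_dim r" and b: "b < nat_dim r" and c: "c < nat_dim r" and d: "d < nat_dim r"
  shows "good r a b c d"
proof -
  have n0: "0 < nat_dim r" and n1: "1 < nat_dim r" and n2: "2 < nat_dim r" and rn: "r < nat_dim r"
    using r3 by (auto simp: nat_dim_def)
  have S1: "good r i 1 2 r" if "i < nat_dim r" "i \<noteq> 1" "i \<noteq> 2" "i \<noteq> r" for i
    by (rule R1[OF base n0 n1 n2 that(1)]) (use that r3 in auto)
  have S2: "good r i j 2 r" if "i < nat_dim r" "j < nat_dim r" "i \<noteq> j" "i \<noteq> 2" "j \<noteq> 2" "i \<noteq> r" "j \<noteq> r" for i j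
  proof -
    consider "j = 1" | "i = 1" | "i \<noteq> 1" "j \<noteq> 1" by blast
    then show ?thesis
    proof cases
      case 1 then show ?thesis using S1[of i] that by auto
    next
      case 2 then show ?thesis using sw12[OF S1[of j]] that by auto
    next
      case 3
      have "good r i 1 2 r" using S1[of i] that 3 by auto
      then show ?thesis by (rule R2) (use that 3 n1 n2 r3 in auto)
    qed
  qed
  have S3: "good r i j k r" if "i < nat_dim r" "j < nat_dim r" "k < nat_dim r" "i \<noteq> j" "i \<noteq> k" "j \<noteq> k"
     "i \<noteq> r" "j \<noteq> r" "k \<noteq> r" for i j k
  proof -
    consider "k = 2" | "i = 2" | "j = 2" | "i \<noteq> 2" "j \<noteq> 2" "k \<noteq> 2" by blast
    then show ?thesis
    proof cases
      case 1 then show ?thesis using S2[of i j] that by auto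
    next
      case 2
      have "good r k j 2 r" using S2[of k j] that 2 by auto
      then have "good r k 2 j r" by (rule sw23)
      then have "good r 2 k j r" by (rule sw12)
      from sw23[OF this] show ?thesis using 2 by simp
    next
      case 3
      have "good r i k 2 r" using S2[of i k] that 3 by auto
      from sw23[OF this] show ?thesis using 3 by simp
    next
      case 4
      have "good r i j 2 r" using S2[of i j] that 4 by auto
      then show ?thesis by (rule R3) (use that 4 n2 r3 in auto)
    qed
  qed
  show ?thesis
  proof (cases "distinct [a,b,c,d]")
    case False then show ?thesis by (rule good_dup)
  next
    case True
    consider "d = r" | "c = r" | "b = r" | "a = r" | "a \<noteq> r" "b \<noteq> r" "c \<noteq> r" "d \<noteq> r" by blast
    then show ?thesis
    proof cases
      case 1 then show ?thesis using S3[of a b c] True a b c by auto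
    next
      case 2
      have "good r a b d r" using S3[of a b d] True a b d 2 by auto
      from sw34[OF this] show ?thesis using 2 by simp
    next
      case 3
      have "good r a c d r" using S3[of a c d] True a c d 3 by auto
      then have "good r a c r d" by (rule sw34)
      from sw23[OF this] show ?thesis using 3 by simp
    next
      case 4
      have "good r b c d r" using S3[of b c d] True b c d 4 by auto
      then have "good r b c r d" by (rule sw34)
      then have "good r b r c d" by (rule sw23)
      from sw12[OF this] show ?thesis using 4 by simp
    next
      case 5
      have "good r a b c r" using S3[of a b c] True a b c 5 by auto
      then show ?thesis by (rule chg) (use a b c d rn 5 True in auto)
    qed
  qed
qed


lemma eps_app: "eps i k = (if k = i then 1 else 0)" by (simp add: eps_def)

lemma rv_plus:
  assumes ij: "1 \<le> i" "i < j" "j \<le> r"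
  shows "root_vec r (eps i + eps j) = e_plus r i j"
proof -
  have n1: "\<not> (\<exists>i' j'. 1 \<le> i' \<and> i' < j' \<and> j' \<le> r \<and> eps i + eps j = eps i' - eps j')"
  proof
    assume "\<exists>i' j'. 1 \<le> i' \<and> i' < j' \<and> j' \<le> r \<and> eps i + eps j = eps i' - eps j'"
    then obtain i' j' where h: "i' < j'" "eps i + eps j = eps i' - eps j'" by blast
    have "eps i j' + eps j j' = eps i' j' - eps j' j'" using fun_cong[OF h(2), of j'] by simp
    then show False using h(1) by (auto simp: eps_app split: if_splits)
  qed
  have e2: "\<exists>i' j'. 1 \<le> i' \<and> i' < j' \<and> j' \<le> r \<and> eps i + eps j = eps i' + eps j'" using ij by blast
  have uniq: "(i', j') = (i, j)" if h: "1 \<le> i' \<and> i' < j' \<and> j' \<le> r \<and> eps i + eps j = eps i' + eps j'" for i' j'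
  proof -
    have e: "eps i + eps j = eps i' + eps j'" using h by simp
    have a: "eps i i + eps j i = eps i' i + eps j' i" using fun_cong[OF e, of i] by simp
    have b: "eps i j + eps j j = eps i' j + eps j' j" using fun_cong[OF e, of j] by simp
    have c: "eps i i' + eps j i' = eps i' i' + eps j' i'" using fun_cong[OF e, of i'] by simp
    show ?thesis using a b c ij h by (auto simp: eps_app split: if_splits)
  qed
  have "(SOME (i', j'). 1 \<le> i' \<and> i' < j' \<and> j' \<le> r \<and> eps i + eps j = eps i' + eps j') = (i, j)"
  proof (rule some_equality)
    show "case (i, j) of (i', j') \<Rightarrow> 1 \<le> i' \<and> i' < j' \<and> j' \<le> r \<and> eps i + eps j = eps i' + eps j'"
      using ij by simp
  next
    fix t assume "case t of (i', j') \<Rightarrow> 1 \<le> i' \<and> i' < j' \<and> j' \<le> r \<and> eps i + eps j = eps i' + eps j'"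
    then show "t = (i, j)" using uniq by (cases t) auto
  qed
  note sm = this
  show ?thesis unfolding root_vec_def if_not_P[OF n1] if_P[OF e2] sm by simp
qed

lemma rv_short:
  assumes i: "1 \<le> i" "i \<le> r"
  shows "root_vec r (eps i) = e_short r i"
proof -
  have n1: "\<not> (\<exists>i' j'. 1 \<le> i' \<and> i' < j' \<and> j' \<le> r \<and> eps i = eps i' - eps j')"
  proof
    assume "\<exists>i' j'. 1 \<le> i' \<and> i' < j' \<and> j' \<le> r \<and> eps i = eps i' - eps j'"
    then obtain i' j' where h: "i' < j'" "eps i = eps i' - eps j'" by blast
    have "eps i j' = eps i' j' - eps j' j'" using fun_cong[OF h(2), of j'] by simp
    then show False using h(1) by (auto simp: eps_app split: if_splits)
  qed
  have n2: "\<not> (\<exists>i' j'. 1 \<le> i' \<and> i' < j' \<and> j' \<le> r \<and> eps i = eps i' + eps j')"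
  proof
    assume "\<exists>i' j'. 1 \<le> i' \<and> i' < j' \<and> j' \<le> r \<and> eps i = eps i' + eps j'"
    then obtain i' j' where h: "i' < j'" "eps i = eps i' + eps j'" by blast
    have "eps i j' = eps i' j' + eps j' j'" "eps i i' = eps i' i' + eps j' i'"
      using fun_cong[OF h(2), of j'] fun_cong[OF h(2), of i'] by simp_all
    then have "eps i j' = 1" "eps i i' = 1" using h(1) by (simp_all add: eps_app)
    then have "j' = i" "i' = i" by (simp_all add: eps_app split: if_splits)
    then show False using h(1) by simp
  qed
  have "(SOME i'. 1 \<le> i' \<and> i' \<le> r \<and> eps i = eps i') = i"
  proof (rule some_equality)
    fix i' assume h: "1 \<le> i' \<and> i' \<le> r \<and> eps i = eps i'"
    have "eps i i' = eps i' i'" using h by simp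
    then show "i' = i" by (auto simp: eps_app split: if_splits)
  qed (use i in simp)
  then show ?thesis unfolding root_vec_def using n1 n2 i by auto
qed

lemma inv_form_unit:
  assumes x: "x \<in> carrier_mat n n" and a: "a < n" and b: "b < n"
  shows "inv_form (unit_mat n a b) x = x $$ (b, a) / 2"
proof -
  have "mat_trace (unit_mat n a b * x) = (\<Sum>i<n. (unit_mat n a b * x) $$ (i,i))"
    unfolding mat_trace_def by simp
  also have "\<dots> = (\<Sum>i<n. if i = a then x $$ (b,i) else 0)"
    by (rule sum.cong[OF refl]) (simp add: unit_mult_index[OF x _ _ b])
  also have "\<dots> = x $$ (b,a)" using a by simp
  finally show ?thesis unfolding inv_form_def by simp
qed

lemma inv_form_minus:
  assumes x: "x \<in> carrier_mat n n" and U: "U \<in> carrier_mat n n" and V: "V \<in> carrier_mat n n"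
  shows "inv_form (U - V) x = inv_form U x - inv_form V x"
proof -
  have "(U - V) * x = U * x - V * x" by (rule minus_mult_distrib_mat[OF U V x])
  then show ?thesis unfolding inv_form_def
    using trace_minus[of "U * x" n "V * x"] U V x by (simp add: field_simps)
qed

lemma inv_form_smult_minus:
  assumes x: "x \<in> carrier_mat n n" and U: "U \<in> carrier_mat n n" and V: "V \<in> carrier_mat n n"
  shows "inv_form (c \<cdot>\<^sub>m (U - V)) x = c * (inv_form U x - inv_form V x)"
proof -
  have UV: "U - V \<in> carrier_mat n n" using V by (simp add: minus_carrier_mat)
  have M: "(U - V) * x \<in> carrier_mat n n" using UV x by simp
  have "(c \<cdot>\<^sub>m (U - V)) * x = c \<cdot>\<^sub>m ((U - V) * x)"
    using mult_smult_assoc_mat[OF UV x] by simp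
  moreover have "mat_trace (c \<cdot>\<^sub>m ((U - V) * x)) = c * mat_trace ((U - V) * x)"
    using M V unfolding mat_trace_def by (auto simp: sum_distrib_left intro!: sum.cong)
  ultimately have "inv_form (c \<cdot>\<^sub>m (U - V)) x = c * inv_form (U - V) x"
    unfolding inv_form_def by simp
  then show ?thesis using inv_form_minus[OF x U V] by simp
qed

lemma inv_e_plus:
  assumes x: "x \<in> carrier_mat (nat_dim r) (nat_dim r)" and ij: "1 \<le> i" "i \<le> r" "1 \<le> j" "j \<le> r"
  shows "inv_form (e_plus r i j) x = - (if (i, j) = (2, 3) then -1 else 1) * SS r x (i-1) (j-1)"
proof -
  let ?n = "nat_dim r"
  have n: "pos_idx r i < ?n" "pos_idx r j < ?n" "neg_idx r i < ?n" "neg_idx r j < ?n"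
    using ij by (auto simp: pos_idx_def neg_idx_def nat_dim_def)
  have "inv_form (e_plus r i j) x = (if (i, j) = (2, 3) then -1 else 1) *
     (x $$ (neg_idx r j, pos_idx r i) / 2 - x $$ (neg_idx r i, pos_idx r j) / 2)"
    unfolding e_plus_def inv_form_smult_minus[OF x unit_mat_carrier unit_mat_carrier]
    by (simp add: inv_form_unit[OF x] n)
  moreover have "neg_idx r j = 2*r - (j-1)" "neg_idx r i = 2*r - (i-1)"
    using ij by (auto simp: neg_idx_def)
  ultimately show ?thesis unfolding SS_def AA_def pos_idx_def by (simp add: field_simps)
qed

lemma inv_e_short:
  assumes x: "x \<in> carrier_mat (nat_dim r) (nat_dim r)" and i: "1 \<le> i" "i \<le> r"
  shows "inv_form (e_short r i) x = - complex_of_real (sqrt 2) * SS r x (i-1) r"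
proof -
  let ?n = "nat_dim r"
  have n: "pos_idx r i < ?n" "neg_idx r i < ?n" "mid_idx r < ?n"
    using i by (auto simp: pos_idx_def neg_idx_def nat_dim_def mid_idx_def)
  have "inv_form (e_short r i) x = complex_of_real (sqrt 2) *
     (x $$ (mid_idx r, pos_idx r i) / 2 - x $$ (neg_idx r i, mid_idx r) / 2)"
    unfolding e_short_def inv_form_smult_minus[OF x unit_mat_carrier unit_mat_carrier]
    by (simp add: inv_form_unit[OF x] n)
  moreover have "neg_idx r i = 2*r - (i-1)" "mid_idx r = 2*r - r"
    using i by (auto simp: neg_idx_def mid_idx_def)
  ultimately show ?thesis unfolding SS_def AA_def pos_idx_def by (simp add: field_simps)
qed


lemma roots4:
  assumes "r \<ge> 4"
  shows "theta2 r = eps 3 + eps 4" "beta1 r + theta2 r = eps 2 + eps 4"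
    "delta1 r + theta2 r = eps 1 + eps 3" "beta2 r + theta2 r = eps 2 + eps 3"
    "delta2 r + theta2 r = eps 1 + eps 4"
  using assms by (auto intro!: ext simp: theta2_def beta1_def delta1_def beta2_def delta2_def simple_root_def eps_def)

lemma roots3:
  shows "theta2 3 = eps 3" "beta1 3 + theta2 3 = eps 2"
    "delta1 3 + theta2 3 = eps 1 + eps 3" "beta2 3 + theta2 3 = eps 2 + eps 3"
    "delta2 3 + theta2 3 = eps 1"
  by (auto intro!: ext simp: theta2_def beta1_def delta1_def beta2_def delta2_def simple_root_def eps_def)

lemma w2_eval4:
  assumes r: "r \<ge> 4" and x: "x \<in> carrier_mat (nat_dim r) (nat_dim r)"
  shows "s2_eval (w2 r) x = Pf r x 0 1 2 3"
proof -
  have rv0: "root_vec r (theta r) = e_plus r 1 2" unfolding theta_def by (rule rv_plus) (use r in auto)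
  have rv1: "root_vec r (theta2 r) = e_plus r 3 4" unfolding roots4(1)[OF r] by (rule rv_plus) (use r in auto)
  have rv2: "root_vec r (beta1 r + theta2 r) = e_plus r 2 4" unfolding roots4(2)[OF r] by (rule rv_plus) (use r in auto)
  have rv3: "root_vec r (delta1 r + theta2 r) = e_plus r 1 3" unfolding roots4(3)[OF r] by (rule rv_plus) (use r in auto)
  have rv4: "root_vec r (beta2 r + theta2 r) = e_plus r 2 3" unfolding roots4(4)[OF r] by (rule rv_plus) (use r in auto)
  have rv5: "root_vec r (delta2 r + theta2 r) = e_plus r 1 4" unfolding roots4(5)[OF r] by (rule rv_plus) (use r in auto)
  note rv = rv0 rv1 rv2 rv3 rv4 rv5
  show ?thesis unfolding w2_def rv s2_eval_def using r
    by (simp add: inv_e_plus[OF x] Pf_def algebra_simps)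
qed

lemma w2_eval3:
  assumes x: "x \<in> carrier_mat (nat_dim 3) (nat_dim 3)"
  shows "s2_eval (w2 3) x = complex_of_real (sqrt 2) * Pf 3 x 0 1 2 3"
proof -
  have rv0: "root_vec 3 (theta 3) = e_plus 3 1 2" unfolding theta_def by (rule rv_plus) auto
  have rv1: "root_vec 3 (theta2 3) = e_short 3 3" unfolding roots3(1) by (rule rv_short) auto
  have rv2: "root_vec 3 (beta1 3 + theta2 3) = e_short 3 2" unfolding roots3(2) by (rule rv_short) auto
  have rv3: "root_vec 3 (delta1 3 + theta2 3) = e_plus 3 1 3" unfolding roots3(3) by (rule rv_plus) auto
  have rv4: "root_vec 3 (beta2 3 + theta2 3) = e_plus 3 2 3" unfolding roots3(4) by (rule rv_plus) auto
  have rv5: "root_vec 3 (delta2 3 + theta2 3) = e_short 3 1" unfolding roots3(5) by (rule rv_short) auto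
  note rv = rv0 rv1 rv2 rv3 rv4 rv5
  show ?thesis unfolding w2_def rv s2_eval_def
    by (simp add: inv_e_plus[OF x] inv_e_short[OF x] Pf_def algebra_simps)
qed

lemma good0123:
  assumes r: "r \<ge> 3"
  shows "good r 0 1 2 3"
proof (cases "r = 3")
  case True
  have "goodf 3 (\<lambda>x. s2_eval (w2 3) x)" unfolding goodf_def by (rule bexI[OF _ W2.gen]) simp
  then have "goodf 3 (\<lambda>x. inverse (complex_of_real (sqrt 2)) * s2_eval (w2 3) x)" by (rule goodf_smult)
  then have "good 3 0 1 2 3" unfolding good_def
    by (rule goodf_cong) (simp add: w2_eval3)
  then show ?thesis using True by simp
next
  case False
  then have r4: "r \<ge> 4" using r by simp
  have "goodf r (\<lambda>x. s2_eval (w2 r) x)" unfolding goodf_def by (rule bexI[OF _ W2.gen]) simp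
  then show ?thesis unfolding good_def by (rule goodf_cong) (simp add: w2_eval4[OF r4])
qed

lemma good_base:
  assumes r: "r \<ge> 3"
  shows "good r 0 1 2 r"
proof (cases "r = 3")
  case True then show ?thesis using good0123[OF r] by simp
next
  case False
  then show ?thesis
    by (intro move_in[OF good0123[OF r]]) (use r in \<open>auto simp: nat_dim_def\<close>)
qed

lemma Pf_vanish:
  assumes r: "r \<ge> 3" and x: "x \<in> zero_locus_W2 r"
    and a: "a < nat_dim r" and b: "b < nat_dim r" and c: "c < nat_dim r" and d: "d < nat_dim r"
  shows "Pf r x a b c d = 0"
proof -
  have "good r a b c d" by (rule all_good[OF r good_base[OF r] a b c d])
  then obtain L where L: "L \<in> W2 r" and e: "\<forall>y \<in> carrier_mat (nat_dim r) (nat_dim r). s2_eval L y = Pf r y a b c d"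
    unfolding good_def goodf_def by blast
  have xc: "x \<in> carrier_mat (nat_dim r) (nat_dim r)" and z: "s2_eval L x = 0"
    using x L unfolding zero_locus_W2_def so_alg_def by auto
  show ?thesis using e xc z by simp
qed


definition mk2 :: "nat \<Rightarrow> (nat \<Rightarrow> complex) \<Rightarrow> (nat \<Rightarrow> complex) \<Rightarrow> (nat \<Rightarrow> complex) \<Rightarrow> (nat \<Rightarrow> complex) \<Rightarrow> complex mat" where
  "mk2 r P Q U V = mat (nat_dim r) (nat_dim r) (\<lambda>(i,j). P (2*r - i) * U j - Q (2*r - i) * V j)"

definition gg :: "nat \<Rightarrow> (nat \<Rightarrow> complex) \<Rightarrow> (nat \<Rightarrow> complex) \<Rightarrow> complex" where
  "gg r u w = (\<Sum>c<nat_dim r. u c * w (2*r - c))"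

abbreviation mk :: "nat \<Rightarrow> (nat \<Rightarrow> complex) \<Rightarrow> (nat \<Rightarrow> complex) \<Rightarrow> complex mat" where
  "mk r P Q \<equiv> mk2 r P Q Q P"

lemma mk2_carrier[simp]: "mk2 r P Q U V \<in> carrier_mat (nat_dim r) (nat_dim r)"
  unfolding mk2_def by simp

lemma mk2_index: "i < nat_dim r \<Longrightarrow> j < nat_dim r \<Longrightarrow> mk2 r P Q U V $$ (i,j) = P (2*r - i) * U j - Q (2*r - i) * V j"
  unfolding mk2_def by simp

lemma gg_sym: "gg r u w = gg r w u"
  unfolding gg_def
proof (rule sum.reindex_bij_witness[of _ "\<lambda>c. 2*r - c" "\<lambda>c. 2*r - c"])
qed (auto simp: nat_dim_def mult.commute)

lemma mk2_mult:
  "mk2 r P Q U V * mk2 r P' Q' U' V' =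
   mk2 r P Q (\<lambda>j. gg r U P' * U' j - gg r U Q' * V' j) (\<lambda>j. gg r V P' * U' j - gg r V Q' * V' j)"
proof (rule eq_matI)
  fix i j assume i: "i < dim_row (mk2 r P Q (\<lambda>j. gg r U P' * U' j - gg r U Q' * V' j) (\<lambda>j. gg r V P' * U' j - gg r V Q' * V' j))"
    and j: "j < dim_col (mk2 r P Q (\<lambda>j. gg r U P' * U' j - gg r U Q' * V' j) (\<lambda>j. gg r V P' * U' j - gg r V Q' * V' j))"
  have i': "i < nat_dim r" and j': "j < nat_dim r" using i j by (simp_all add: mk2_def)
  let ?n = "nat_dim r"
  have "(mk2 r P Q U V * mk2 r P' Q' U' V') $$ (i,j) =
    (\<Sum>c<?n. (P (2*r - i) * U c - Q (2*r - i) * V c) * (P' (2*r - c) * U' j - Q' (2*r - c) * V' j))"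
    by (subst mult_idx[OF mk2_carrier mk2_carrier i' j']) (auto intro!: sum.cong simp: mk2_index j' i')
  also have "\<dots> = (\<Sum>c<?n. P (2*r - i) * U' j * (U c * P' (2*r - c)) - P (2*r - i) * V' j * (U c * Q' (2*r - c))
     - Q (2*r - i) * U' j * (V c * P' (2*r - c)) + Q (2*r - i) * V' j * (V c * Q' (2*r - c)))"
    by (rule sum.cong) (simp_all add: algebra_simps)
  also have "\<dots> = P (2*r - i) * U' j * gg r U P' - P (2*r - i) * V' j * gg r U Q'
     - Q (2*r - i) * U' j * gg r V P' + Q (2*r - i) * V' j * gg r V Q'"
    unfolding gg_def by (simp add: sum.distrib sum_subtractf sum_distrib_left)
  also have "\<dots> = mk2 r P Q (\<lambda>j. gg r U P' * U' j - gg r U Q' * V' j) (\<lambda>j. gg r V P' * U' j - gg r V Q' * V' j) $$ (i,j)"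
    by (simp add: mk2_index i' j' algebra_simps)
  finally show "(mk2 r P Q U V * mk2 r P' Q' U' V') $$ (i,j) = mk2 r P Q (\<lambda>j. gg r U P' * U' j - gg r U Q' * V' j) (\<lambda>j. gg r V P' * U' j - gg r V Q' * V' j) $$ (i,j)" .
qed (simp_all add: mk2_def)

definition cc :: "nat \<Rightarrow> (nat \<Rightarrow> complex) \<Rightarrow> (nat \<Rightarrow> complex) \<Rightarrow> complex" where
  "cc r P Q = gg r P Q ^ 2 - gg r P P * gg r Q Q"

lemma gg_lin: "gg r u (\<lambda>j. a * v j - b * w j) = a * gg r u v - b * gg r u w"
  unfolding gg_def by (simp add: sum_subtractf sum_distrib_left algebra_simps)

lemma mk_sq: "mk r P Q * mk r P Q = mk2 r P Q (\<lambda>j. gg r Q P * Q j - gg r Q Q * P j) (\<lambda>j. gg r P P * Q j - gg r P Q * P j)"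
  by (rule mk2_mult)

lemma mk_cube: "mk r P Q * (mk r P Q * mk r P Q) = cc r P Q \<cdot>\<^sub>m mk r P Q"
proof -
  have "mk r P Q * (mk r P Q * mk r P Q) = mk2 r P Q (\<lambda>j. cc r P Q * Q j) (\<lambda>j. cc r P Q * P j)"
    unfolding mk_sq mk2_mult gg_lin
    by (rule arg_cong2[where f = "mk2 r P Q"]) (auto simp: cc_def gg_sym[of r Q P] power2_eq_square algebra_simps)
  also have "\<dots> = cc r P Q \<cdot>\<^sub>m mk r P Q"
    by (rule eq_matI) (auto simp: mk2_def algebra_simps)
  finally show ?thesis .
qed

lemma mk_so: "mk r P Q \<in> so_alg r"
  unfolding so_alg_iff
proof (intro conjI allI impI)
  fix a b assume a: "a < nat_dim r" and b: "b < nat_dim r"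
  have a': "2*r - a < nat_dim r" and b': "2*r - b < nat_dim r" by (auto simp: nat_dim_def)
  have aa: "2*r - (2*r - a) = a" "2*r - (2*r - b) = b" using a b by (auto simp: nat_dim_def)
  show "AA r (mk r P Q) a b = - AA r (mk r P Q) b a"
    unfolding AA_def mk2_index[OF a' b] mk2_index[OF b' a] aa by simp
qed simp

lemma nilp_c:
  fixes x :: "complex mat"
  assumes x: "x \<in> carrier_mat n n" and cube: "x * (x * x) = c \<cdot>\<^sub>m x"
    and nil: "x ^\<^sub>m k = 0\<^sub>m n n" and nz: "x \<noteq> 0\<^sub>m n n"
  shows "c = 0"
proof -
  have pw: "x ^\<^sub>m (2*j+1) = c ^ j \<cdot>\<^sub>m x" for j
  proof (induction j)
    case 0 then show ?case using x by (auto intro!: eq_matI)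
  next
    case (Suc j)
    have "x ^\<^sub>m (2 * Suc j + 1) = (x ^\<^sub>m (2*j+1) * x) * x" by simp
    also have "\<dots> = (c ^ j \<cdot>\<^sub>m x * x) * x" using Suc by simp
    also have "\<dots> = c ^ j \<cdot>\<^sub>m (x * (x * x))"
      using x by (simp add: mult_smult_assoc_mat[of x n n x n] mult_smult_assoc_mat[of "x * x" n n x n])
    also have "\<dots> = c ^ Suc j \<cdot>\<^sub>m x" unfolding cube by (auto intro!: eq_matI)
    finally show ?case .
  qed
  have z: "x ^\<^sub>m m = 0\<^sub>m n n" if "m \<ge> k" for m
    using that
  proof (induction m)
    case 0 then show ?case using nil by simp
  next
    case (Suc m)
    show ?case
    proof (cases "Suc m = k")
      case True then show ?thesis using nil by simp
    next
      case False
      then have "x ^\<^sub>m m = 0\<^sub>m n n" using Suc by simp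
      then show ?thesis using x by simp
    qed
  qed
  have "c ^ k \<cdot>\<^sub>m x = 0\<^sub>m n n" using pw[of k] z[of "2*k+1"] by simp
  moreover obtain i j where ij: "i < n" "j < n" "x $$ (i,j) \<noteq> 0"
    using nz x by (metis eq_matI carrier_matD index_zero_mat)
  ultimately have "c ^ k * x $$ (i,j) = 0"
    using x by (metis carrier_matD index_smult_mat(1) index_zero_mat(1))
  then show ?thesis using ij by simp
qed


lemma matvec_idx:
  assumes A: "A \<in> carrier_mat n n" and z: "z \<in> carrier_vec n" and k: "k < n"
  shows "(A *\<^sub>v z) $ k = (\<Sum>c<n. A $$ (k,c) * z $ c)"
  using A z k by (auto simp: scalar_prod_def atLeast0LessThan intro!: sum.cong)

lemma sum_split3:
  fixes n :: nat
  assumes "n \<ge> 3"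
  shows "(\<Sum>c<n. f c) = f 0 + f 1 + f 2 + (\<Sum>c\<in>{3..<n}. f c)"
proof -
  have "{..<n} = {0,1,2} \<union> {3..<n}" using assms by auto
  then show ?thesis by (simp add: sum.union_disjoint add.assoc)
qed

lemma lin2:
  fixes a b c d X Z :: complex
  assumes "a * X + b * Z = 0" "c * X + d * Z = 0" "a * d - b * c \<noteq> 0"
  shows "X = 0 \<and> Z = 0"
proof -
  have "X * (a * d - b * c) = d * (a * X + b * Z) - b * (c * X + d * Z)" by (simp add: algebra_simps)
  then have x: "X = 0" using assms by simp
  have "Z * (a * d - b * c) = a * (c * X + d * Z) - c * (a * X + b * Z)" by (simp add: algebra_simps)
  then have "Z = 0" using assms by simp
  with x show ?thesis by simp
qed

lemma diag_zero_blocks: "diag_block_mat (replicate m (jordan_block 1 (0::complex))) = 0\<^sub>m m m"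
proof (induction m)
  case 0 then show ?case by simp
next
  case (Suc m)
  have j: "jordan_block 1 (0::complex) = 0\<^sub>m 1 1" by (auto intro!: eq_matI)
  show ?case using Suc by (auto simp: j Let_def intro!: eq_matI)
qed

definition Jm :: "nat \<Rightarrow> complex mat" where
  "Jm n = mat n n (\<lambda>(a,b). if (a = 0 \<and> b = 1) \<or> (a = 1 \<and> b = 2) then 1 else 0)"

lemma jordan_matrix_form: "jordan_matrix ((3, 0::complex) # replicate m (1, 0)) = Jm (3 + m)"
proof -
  have "jordan_matrix ((3, 0::complex) # replicate m (1, 0)) =
     diag_block_mat (jordan_block 3 0 # replicate m (jordan_block 1 0))"
    unfolding jordan_matrix_def by simp
  also have "\<dots> = four_block_mat (jordan_block 3 0) (0\<^sub>m 3 m) (0\<^sub>m m 3) (0\<^sub>m m m)"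
    unfolding diag_block_mat.simps Let_def diag_zero_blocks by simp
  also have "\<dots> = Jm (3 + m)"
    by (rule eq_matI) (auto simp: Jm_def)
  finally show ?thesis .
qed

lemma Jm_carrier[simp]: "Jm n \<in> carrier_mat n n" unfolding Jm_def by simp
lemma Jm_dim[simp]: "dim_row (Jm n) = n" "dim_col (Jm n) = n" unfolding Jm_def by simp_all

lemma Jm_vec:
  assumes n: "n \<ge> 3" and z: "z \<in> carrier_vec n"
  shows "Jm n *\<^sub>v z = vec n (\<lambda>a. if a = 0 then z $ 1 else if a = 1 then z $ 2 else 0)"
proof (rule eq_vecI)
  fix a assume a: "a < dim_vec (vec n (\<lambda>a. if a = 0 then z $ 1 else if a = 1 then z $ 2 else 0))"
  then have a': "a < n" by simp
  have "(Jm n *\<^sub>v z) $ a = (\<Sum>c<n. Jm n $$ (a,c) * z $ c)" by (rule matvec_idx[OF Jm_carrier z a'])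
  also have "\<dots> = (\<Sum>c<n. (if a = 0 \<and> c = 1 then z $ 1 else 0) + (if a = 1 \<and> c = 2 then z $ 2 else 0))"
    by (rule sum.cong) (auto simp: Jm_def a')
  also have "\<dots> = (if a = 0 then z $ 1 else if a = 1 then z $ 2 else 0)"
    using n by (simp add: sum.distrib)
  finally show "(Jm n *\<^sub>v z) $ a = vec n (\<lambda>a. if a = 0 then z $ 1 else if a = 1 then z $ 2 else 0) $ a"
    using a' by simp
qed (simp)


lemma dim_mk2[simp]: "dim_row (mk2 r P Q U V) = nat_dim r" "dim_col (mk2 r P Q U V) = nat_dim r"
  unfolding mk2_def by simp_all

definition lin :: "nat \<Rightarrow> (nat \<Rightarrow> complex) \<Rightarrow> complex vec \<Rightarrow> complex" where
  "lin r u z = (\<Sum>c<nat_dim r. u c * z $ c)"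

lemma mkv:
  assumes z: "z \<in> carrier_vec (nat_dim r)" and k: "k < nat_dim r"
  shows "(mk r P Q *\<^sub>v z) $ k = P (2*r - k) * lin r Q z - Q (2*r - k) * lin r P z"
proof -
  have "(mk r P Q *\<^sub>v z) $ k = (\<Sum>c<nat_dim r. mk r P Q $$ (k,c) * z $ c)"
    by (rule matvec_idx[OF mk2_carrier z k])
  also have "\<dots> = (\<Sum>c<nat_dim r. P (2*r - k) * (Q c * z $ c) - Q (2*r - k) * (P c * z $ c))"
    by (rule sum.cong) (auto simp: mk2_index k algebra_simps)
  also have "\<dots> = P (2*r - k) * lin r Q z - Q (2*r - k) * lin r P z"
    unfolding lin_def by (simp add: sum_subtractf sum_distrib_left)
  finally show ?thesis .
qed

definition kvec :: "nat \<Rightarrow> (nat \<Rightarrow> complex) \<Rightarrow> (nat \<Rightarrow> complex) \<Rightarrow> nat \<Rightarrow> nat \<Rightarrow> nat \<Rightarrow> complex vec" where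
  "kvec r P Q s t i = (let D = P s * Q t - Q s * P t;
      cf = (P i * Q t - Q i * P t) / D; df = (P s * Q i - Q s * P i) / D in
    vec (nat_dim r) (\<lambda>k. (if k = i then 1 else 0) - cf * (if k = s then 1 else 0) - df * (if k = t then 1 else 0)))"

lemma kvec_carrier[simp]: "kvec r P Q s t i \<in> carrier_vec (nat_dim r)"
  unfolding kvec_def Let_def by simp

lemma kvec_index:
  "k < nat_dim r \<Longrightarrow> kvec r P Q s t i $ k = (if k = i then 1 else 0)
     - (P i * Q t - Q i * P t) / (P s * Q t - Q s * P t) * (if k = s then 1 else 0)
     - (P s * Q i - Q s * P i) / (P s * Q t - Q s * P t) * (if k = t then 1 else 0)"
  unfolding kvec_def Let_def by simp

lemma lin_kvec:
  assumes s: "s < nat_dim r" and t: "t < nat_dim r" and i: "i < nat_dim r"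
  shows "lin r u (kvec r P Q s t i) = u i
     - (P i * Q t - Q i * P t) / (P s * Q t - Q s * P t) * u s
     - (P s * Q i - Q s * P i) / (P s * Q t - Q s * P t) * u t"
proof -
  let ?D = "P s * Q t - Q s * P t"
  let ?cf = "(P i * Q t - Q i * P t) / ?D" and ?df = "(P s * Q i - Q s * P i) / ?D"
  have "lin r u (kvec r P Q s t i) = (\<Sum>c<nat_dim r. (if c = i then u i else 0) - (if c = s then ?cf * u s else 0)
       - (if c = t then ?df * u t else 0))"
    unfolding lin_def by (rule sum.cong) (auto simp: kvec_index)
  also have "\<dots> = u i - ?cf * u s - ?df * u t"
    using s t i by (simp add: sum_subtractf)
  finally show ?thesis .
qed

lemma y_kvec:
  assumes s: "s < nat_dim r" and t: "t < nat_dim r" and i: "i < nat_dim r"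
    and D: "P s * Q t - Q s * P t \<noteq> 0"
  shows "mk r P Q *\<^sub>v kvec r P Q s t i = 0\<^sub>v (nat_dim r)"
proof -
  have lP: "lin r P (kvec r P Q s t i) = 0" unfolding lin_kvec[OF s t i] using D
    by (simp add: field_simps)
  have lQ: "lin r Q (kvec r P Q s t i) = 0" unfolding lin_kvec[OF s t i] using D
    by (simp add: field_simps)
  show ?thesis
  proof (rule eq_vecI)
    fix k assume "k < dim_vec (0\<^sub>v (nat_dim r) :: complex vec)"
    then have k: "k < nat_dim r" by simp
    show "(mk r P Q *\<^sub>v kvec r P Q s t i) $ k = 0\<^sub>v (nat_dim r) $ k"
      unfolding mkv[OF kvec_carrier k] lP lQ using k by simp
  qed simp
qed


lemma u_exists:
  assumes s: "s < nat_dim r" and t: "t < nat_dim r" and st: "s \<noteq> t"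
    and D: "P s * Q t - Q s * P t \<noteq> 0"
    and w: "w \<in> carrier_vec (nat_dim r)" and yw: "mk r P Q *\<^sub>v w = 0\<^sub>v (nat_dim r)"
    and i0: "i0 < nat_dim r" "w $ i0 \<noteq> 0"
  shows "\<exists>u < nat_dim r. u \<noteq> s \<and> u \<noteq> t \<and> w $ u \<noteq> 0"
proof (rule ccontr)
  assume "\<not> ?thesis"
  then have zero: "\<And>u. u < nat_dim r \<Longrightarrow> u \<noteq> s \<Longrightarrow> u \<noteq> t \<Longrightarrow> w $ u = 0" by blast
  have linw: "lin r f w = f s * w $ s + f t * w $ t" for f
  proof -
    have "lin r f w = (\<Sum>c<nat_dim r. (if c = s then f s * w $ s else 0) + (if c = t then f t * w $ t else 0))"
      unfolding lin_def by (rule sum.cong) (use zero st in auto)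
    then show ?thesis using s t by (simp add: sum.distrib)
  qed
  have s': "2*r - s < nat_dim r" and t': "2*r - t < nat_dim r" by (auto simp: nat_dim_def)
  have ss: "2*r - (2*r - s) = s" and tt: "2*r - (2*r - t) = t" using s t by (auto simp: nat_dim_def)
  have e1: "P s * lin r Q w - Q s * lin r P w = 0"
    using mkv[OF w s', of P Q] yw s' unfolding ss by simp
  have e2: "P t * lin r Q w - Q t * lin r P w = 0"
    using mkv[OF w t', of P Q] yw t' unfolding tt by simp
  have "lin r Q w = 0 \<and> lin r P w = 0"
    by (rule lin2[of "P s" _ "- Q s" _ "P t" "- Q t"]) (use e1 e2 D in \<open>auto simp: algebra_simps\<close>)
  then have f1: "Q s * w $ s + Q t * w $ t = 0" and f2: "P s * w $ s + P t * w $ t = 0"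
    unfolding linw by auto
  have "w $ s = 0 \<and> w $ t = 0"
    by (rule lin2[OF f1 f2]) (use D in \<open>auto simp: algebra_simps\<close>)
  then have "w $ i0 = 0" using zero[OF i0(1)] by (cases "i0 = s"; cases "i0 = t") auto
  then show False using i0 by simp
qed

definition idxl :: "nat \<Rightarrow> nat \<Rightarrow> nat \<Rightarrow> nat \<Rightarrow> nat list" where
  "idxl n s t u = filter (\<lambda>k. k \<noteq> s \<and> k \<noteq> t \<and> k \<noteq> u) [0..<n]"

lemma idxl_props:
  assumes "s < n" "t < n" "u < n" "s \<noteq> t" "s \<noteq> u" "t \<noteq> u"
  shows "length (idxl n s t u) = n - 3" "distinct (idxl n s t u)"
    "set (idxl n s t u) = {0..<n} - {s,t,u}"
proof -
  show d: "distinct (idxl n s t u)" unfolding idxl_def by simp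
  show st: "set (idxl n s t u) = {0..<n} - {s,t,u}" unfolding idxl_def by auto
  have "card ({0..<n} - {s,t,u}) = n - 3"
    using assms by (subst card_Diff_subset) auto
  then show "length (idxl n s t u) = n - 3" using distinct_card[OF d] st by simp
qed

lemma idx_in:
  assumes "s < n" "t < n" "u < n" "s \<noteq> t" "s \<noteq> u" "t \<noteq> u" and c: "3 \<le> c" "c < n"
  shows "idxl n s t u ! (c - 3) < n" "idxl n s t u ! (c - 3) \<noteq> s" "idxl n s t u ! (c - 3) \<noteq> t"
    "idxl n s t u ! (c - 3) \<noteq> u"
proof -
  have "c - 3 < length (idxl n s t u)" using idxl_props[OF assms(1-6)] c by simp
  then have "idxl n s t u ! (c - 3) \<in> set (idxl n s t u)" by simp
  then show "idxl n s t u ! (c - 3) < n" "idxl n s t u ! (c - 3) \<noteq> s" "idxl n s t u ! (c - 3) \<noteq> t"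
    "idxl n s t u ! (c - 3) \<noteq> u"
    using idxl_props(3)[OF assms(1-6)] by auto
qed

lemma idx_inj:
  assumes "s < n" "t < n" "u < n" "s \<noteq> t" "s \<noteq> u" "t \<noteq> u" and c: "3 \<le> c" "c < n" and c': "3 \<le> c'" "c' < n"
  shows "idxl n s t u ! (c - 3) = idxl n s t u ! (c' - 3) \<longleftrightarrow> c = c'"
proof -
  have "c - 3 < length (idxl n s t u)" "c' - 3 < length (idxl n s t u)"
    using idxl_props[OF assms(1-6)] c c' by auto
  then show ?thesis using nth_eq_iff_index_eq[OF idxl_props(2)[OF assms(1-6)]] c c' by auto
qed


lemma matvec_unit:
  fixes A :: "complex mat"
  assumes A: "A \<in> carrier_mat n n" and j: "j < n" and k: "k < n"
  shows "(A *\<^sub>v unit_vec n j) $ k = A $$ (k, j)"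
proof -
  have "(A *\<^sub>v unit_vec n j) $ k = (\<Sum>c<n. A $$ (k,c) * unit_vec n j $ c)"
    by (rule matvec_idx[OF A unit_vec_carrier k])
  also have "\<dots> = (\<Sum>c<n. if c = j then A $$ (k, j) else 0)"
    by (rule sum.cong) (auto simp: j)
  finally show ?thesis using j by simp
qed

lemma orbit_mk:
  assumes r1: "r \<ge> 1" and c0: "cc r P Q = 0"
    and sq: "mk r P Q * mk r P Q \<noteq> 0\<^sub>m (nat_dim r) (nat_dim r)"
  shows "mk r P Q \<in> orbit_3_1 r"
proof -
  define n where "n = nat_dim r"
  define y where "y = mk r P Q"
  have yc: "y \<in> carrier_mat n n" unfolding y_def n_def by simp
  have n3: "n \<ge> 3" using r1 unfolding n_def nat_dim_def by simp
  have yyc: "y * y \<in> carrier_mat n n" using yc by simp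
  have y3: "y * (y * y) = 0\<^sub>m n n"
    unfolding y_def n_def mk_cube c0 by (auto intro!: eq_matI)
  obtain i0 j0 where i0: "i0 < n" and j0: "j0 < n" and yy0: "(y * y) $$ (i0, j0) \<noteq> 0"
  proof -
    have "y * y \<noteq> 0\<^sub>m n n" using sq unfolding y_def n_def .
    then show ?thesis using that yyc by (metis eq_matI carrier_matD index_zero_mat)
  qed
  have ynz: "y \<noteq> 0\<^sub>m n n"
  proof
    assume "y = 0\<^sub>m n n"
    then have "y * y = 0\<^sub>m n n" by simp
    then show False using yy0 i0 j0 by simp
  qed
  obtain i1 j1 where i1: "i1 < n" and j1: "j1 < n" and y1: "y $$ (i1, j1) \<noteq> 0"
    using ynz yc by (metis eq_matI carrier_matD index_zero_mat)
  define s where "s = 2*r - i1"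
  define t where "t = j1"
  define D where "D = P s * Q t - Q s * P t"
  have D: "D \<noteq> 0" using y1 unfolding y_def D_def s_def t_def using i1 j1
    by (simp add: mk2_index n_def)
  have s: "s < n" and t: "t < n" using i1 j1 unfolding s_def t_def n_def nat_dim_def by auto
  have st: "s \<noteq> t" using D unfolding D_def by auto
  define v where "v = (unit_vec n j0 :: complex vec)"
  define yv where "yv = y *\<^sub>v v"
  define w where "w = y *\<^sub>v yv"
  have vc: "v \<in> carrier_vec n" and yvc: "yv \<in> carrier_vec n" and wc: "w \<in> carrier_vec n"
    unfolding v_def yv_def w_def using yc by auto
  have w2: "w = (y * y) *\<^sub>v v" unfolding w_def yv_def using yc vc by simp
  have wi0: "w $ i0 \<noteq> 0" unfolding w2 v_def using matvec_unit[OF yyc j0 i0] yy0 by simp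
  have yw: "y *\<^sub>v w = 0\<^sub>v n"
  proof -
    have "y *\<^sub>v w = (y * (y * y)) *\<^sub>v v" unfolding w2
      using assoc_mult_mat_vec[OF yc yyc vc] by simp
    also have "\<dots> = 0\<^sub>v n" unfolding y3 using vc by (auto intro!: eq_vecI)
    finally show ?thesis .
  qed
  obtain u where u: "u < n" "u \<noteq> s" "u \<noteq> t" "w $ u \<noteq> 0"
    using u_exists[of s r t P Q w i0] s t st D wc yw i0 wi0 unfolding D_def n_def y_def by blast
  define idx where "idx c = idxl n s t u ! (c - 3)" for c
  note dst = s t u(1) st u(2)[symmetric] u(3)[symmetric]
  have idx_n: "idx c < n" and idx_s: "idx c \<noteq> s" and idx_t: "idx c \<noteq> t" and idx_u: "idx c \<noteq> u"
    if "3 \<le> c" "c < n" for c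
    using idx_in[OF dst that] unfolding idx_def by auto
  have idx_eq: "idx c = idx c' \<longleftrightarrow> c = c'" if "3 \<le> c" "c < n" "3 \<le> c'" "c' < n" for c c'
    using idx_inj[OF dst that] unfolding idx_def by auto
  define kv where "kv i = kvec r P Q s t i" for i
  have kvc: "kv i \<in> carrier_vec n" for i unfolding kv_def n_def by simp
  have kvd[simp]: "dim_vec (kv i) = n" for i using kvc[of i] by simp
  have ykv: "y *\<^sub>v kv i = 0\<^sub>v n" if "i < n" for i
    unfolding y_def kv_def n_def by (rule y_kvec) (use s t that D in \<open>auto simp: D_def n_def\<close>)
  have kv_idx: "kv (idx c) $ k = (if k = idx c then 1 else 0)" if "3 \<le> c" "c < n" "k < n" "k \<noteq> s" "k \<noteq> t" for c k
    unfolding kv_def using that by (simp add: kvec_index n_def)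
  define Pm where "Pm = mat n n (\<lambda>(k, c). if c = 0 then w $ k else if c = 1 then yv $ k
     else if c = 2 then v $ k else kv (idx c) $ k)"
  have Pmc: "Pm \<in> carrier_mat n n" unfolding Pm_def by simp
  have colPm: "col Pm c = (if c = 0 then w else if c = 1 then yv else if c = 2 then v else kv (idx c))"
    if c: "c < n" for c
    unfolding Pm_def using c wc yvc vc kvc by (auto intro!: eq_vecI)
  have yP: "y * Pm = Pm * Jm n"
  proof (rule eq_matI)
    fix k c assume k: "k < dim_row (Pm * Jm n)" and c: "c < dim_col (Pm * Jm n)"
    have k': "k < n" and c': "c < n" using k c Pmc by auto
    have "(y * Pm) $$ (k, c) = (y *\<^sub>v col Pm c) $ k" using k' c' yc Pmc by simp
    also have "\<dots> = (if c = 1 then w $ k else if c = 2 then yv $ k else 0)"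
    proof -
      consider "c = 0" | "c = 1" | "c = 2" | "c \<ge> 3" by linarith
      then show ?thesis
      proof cases
        case 1 then show ?thesis using colPm[OF c'] yw k' by simp
      next
        case 2 then show ?thesis using colPm[OF c'] k' unfolding w_def by simp
      next
        case 3 then show ?thesis using colPm[OF c'] k' unfolding yv_def by simp
      next
        case 4 then show ?thesis using colPm[OF c'] k' ykv[OF idx_n[OF 4 c']] by simp
      qed
    qed
    also have "\<dots> = (\<Sum>b<n. Pm $$ (k, b) * Jm n $$ (b, c))"
    proof -
      have "(\<Sum>b<n. Pm $$ (k, b) * Jm n $$ (b, c)) =
        (\<Sum>b<n. (if b = 0 \<and> c = 1 then w $ k else 0) + (if b = 1 \<and> c = 2 then yv $ k else 0))"
        by (rule sum.cong) (auto simp: Jm_def Pm_def k' c')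
      also have "\<dots> = (if c = 1 then w $ k else if c = 2 then yv $ k else 0)"
        using n3 by (simp add: sum.distrib)
      finally show ?thesis by simp
    qed
    also have "\<dots> = (Pm * Jm n) $$ (k, c)" by (rule mult_idx[symmetric, OF Pmc Jm_carrier k' c'])
    finally show "(y * Pm) $$ (k, c) = (Pm * Jm n) $$ (k, c)" .
  qed (use yc Pmc in auto)
  have e0: "Pm *\<^sub>v vec n (\<lambda>a. if a = 0 then \<alpha> else 0) = \<alpha> \<cdot>\<^sub>v w" for \<alpha>
  proof (rule eq_vecI)
    fix k assume "k < dim_vec (\<alpha> \<cdot>\<^sub>v w)"
    then have k: "k < n" using wc by simp
    have "(Pm *\<^sub>v vec n (\<lambda>a. if a = 0 then \<alpha> else 0)) $ k = (\<Sum>c<n. Pm $$ (k, c) * (if c = 0 then \<alpha> else 0))"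
      by (subst matvec_idx[OF Pmc _ k]) (auto intro!: sum.cong)
    also have "\<dots> = (\<Sum>c<n. if c = 0 then w $ k * \<alpha> else 0)"
      by (rule sum.cong) (auto simp: Pm_def k)
    also have "\<dots> = w $ k * \<alpha>" using n3 by simp
    finally show "(Pm *\<^sub>v vec n (\<lambda>a. if a = 0 then \<alpha> else 0)) $ k = (\<alpha> \<cdot>\<^sub>v w) $ k"
      using k wc by simp
  qed (use wc Pmc in simp)
  have w_nz: "\<alpha> \<cdot>\<^sub>v w = 0\<^sub>v n \<Longrightarrow> \<alpha> = 0" for \<alpha>
  proof -
    assume "\<alpha> \<cdot>\<^sub>v w = 0\<^sub>v n"
    then have "(\<alpha> \<cdot>\<^sub>v w) $ i0 = 0" using i0 by simp
    then show "\<alpha> = 0" using wi0 i0 wc by simp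
  qed
  have PJ: "Pm *\<^sub>v (Jm n *\<^sub>v z) = y *\<^sub>v (Pm *\<^sub>v z)" if z: "z \<in> carrier_vec n" for z
  proof -
    have "Pm *\<^sub>v (Jm n *\<^sub>v z) = (Pm * Jm n) *\<^sub>v z" using assoc_mult_mat_vec[OF Pmc Jm_carrier z] by simp
    also have "\<dots> = (y * Pm) *\<^sub>v z" unfolding yP ..
    also have "\<dots> = y *\<^sub>v (Pm *\<^sub>v z)" using assoc_mult_mat_vec[OF yc Pmc z] by simp
    finally show ?thesis .
  qed
  have y0: "y *\<^sub>v 0\<^sub>v n = 0\<^sub>v n" using yc by (auto intro!: eq_vecI simp: scalar_prod_def)
  have inj: "z = 0\<^sub>v n" if z: "z \<in> carrier_vec n" and Pz: "Pm *\<^sub>v z = 0\<^sub>v n" for z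
  proof -
    have Jz: "Jm n *\<^sub>v z = vec n (\<lambda>a. if a = 0 then z $ 1 else if a = 1 then z $ 2 else 0)"
      by (rule Jm_vec[OF n3 z])
    have JJz: "Jm n *\<^sub>v (Jm n *\<^sub>v z) = vec n (\<lambda>a. if a = 0 then z $ 2 else 0)"
      unfolding Jz Jm_vec[OF n3 vec_carrier] using n3 by (auto intro!: eq_vecI)
    have "Pm *\<^sub>v (Jm n *\<^sub>v (Jm n *\<^sub>v z)) = 0\<^sub>v n"
      using PJ[OF mult_mat_vec_carrier[OF Jm_carrier z]] PJ[OF z] Pz y0 by simp
    then have z2: "z $ 2 = 0" unfolding JJz e0 by (rule w_nz)
    have "Pm *\<^sub>v (Jm n *\<^sub>v z) = 0\<^sub>v n" using PJ[OF z] Pz y0 by simp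
    moreover have "Jm n *\<^sub>v z = vec n (\<lambda>a. if a = 0 then z $ 1 else 0)" unfolding Jz z2 by (auto intro!: eq_vecI)
    ultimately have "Pm *\<^sub>v vec n (\<lambda>a. if a = 0 then z $ 1 else 0) = 0\<^sub>v n" by simp
    then have z1: "z $ 1 = 0" unfolding e0 by (rule w_nz)
    have Pk: "(Pm *\<^sub>v z) $ k = w $ k * z $ 0 + (\<Sum>c\<in>{3..<n}. kv (idx c) $ k * z $ c)" if k: "k < n" for k
    proof -
      have "(Pm *\<^sub>v z) $ k = (\<Sum>c<n. Pm $$ (k, c) * z $ c)" by (rule matvec_idx[OF Pmc z k])
      also have "\<dots> = Pm $$ (k, 0) * z $ 0 + Pm $$ (k, 1) * z $ 1 + Pm $$ (k, 2) * z $ 2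
          + (\<Sum>c\<in>{3..<n}. Pm $$ (k, c) * z $ c)" by (rule sum_split3[OF n3])
      also have "(\<Sum>c\<in>{3..<n}. Pm $$ (k, c) * z $ c) = (\<Sum>c\<in>{3..<n}. kv (idx c) $ k * z $ c)"
        by (rule sum.cong) (auto simp: Pm_def k)
      finally show ?thesis using z1 z2 k n3 by (simp add: Pm_def)
    qed
    have "(\<Sum>c\<in>{3..<n}. kv (idx c) $ u * z $ c) = 0"
    proof (rule sum.neutral, rule ballI)
      fix c assume "c \<in> {3..<n}"
      then have c: "3 \<le> c" "c < n" by auto
      have "kv (idx c) $ u = 0" using kv_idx[OF c u(1-3)] idx_u[OF c] by simp
      then show "kv (idx c) $ u * z $ c = 0" by simp
    qed
    then have "w $ u * z $ 0 = 0" using Pk[OF u(1)] Pz u(1) by simp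
    then have z0: "z $ 0 = 0" using u(4) by simp
    have zc: "z $ c = 0" if c: "3 \<le> c" "c < n" for c
    proof -
      have "(\<Sum>c'\<in>{3..<n}. kv (idx c') $ (idx c) * z $ c') = (\<Sum>c'\<in>{3..<n}. if c' = c then z $ c else 0)"
        by (rule sum.cong) (use c in \<open>auto simp: kv_idx idx_n idx_s idx_t idx_eq\<close>)
      also have "\<dots> = z $ c" using c by simp
      finally have "(Pm *\<^sub>v z) $ (idx c) = z $ c" using Pk[OF idx_n[OF c]] z0 by simp
      then show ?thesis using Pz idx_n[OF c] by simp
    qed
    show ?thesis
    proof (rule eq_vecI)
      fix c assume "c < dim_vec (0\<^sub>v n :: complex vec)"
      then have c: "c < n" by simp
      consider "c = 0" | "c = 1" | "c = 2" | "c \<ge> 3" by linarith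
      then show "z $ c = 0\<^sub>v n $ c" using z0 z1 z2 zc c by cases auto
    qed (use z in simp)
  qed
  have "det Pm \<noteq> 0"
  proof
    assume "det Pm = 0"
    then obtain z where "z \<in> carrier_vec n" "z \<noteq> 0\<^sub>v n" "Pm *\<^sub>v z = 0\<^sub>v n"
      using det_0_iff_vec_prod_zero[OF Pmc] by blast
    then show False using inj by blast
  qed
  from det_non_zero_imp_unit[OF Pmc this, unfolded Units_def, of "()"]
  obtain Qm where Qmc: "Qm \<in> carrier_mat n n" and QP: "Qm * Pm = 1\<^sub>m n" and PQ: "Pm * Qm = 1\<^sub>m n"
    by (auto simp: ring_mat_def)
  have "y = y * (Pm * Qm)" using yc by (simp add: PQ)
  also have "\<dots> = (y * Pm) * Qm" using yc Pmc Qmc by simp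
  also have "\<dots> = Pm * Jm n * Qm" unfolding yP ..
  finally have yeq: "y = Pm * Jm n * Qm" .
  have sim: "similar_mat y (Jm n)"
    unfolding similar_mat_def similar_mat_wit_def Let_def
    using yc Pmc Qmc PQ QP yeq by (intro exI[of _ Pm] exI[of _ Qm]) auto
  have lst: "jordan_matrix ((3, 0::complex) # replicate (2 * r - 2) (1, 0)) = Jm n"
  proof -
    have "3 + (2 * r - 2) = n" using r1 unfolding n_def nat_dim_def by simp
    then show ?thesis unfolding jordan_matrix_form by simp
  qed
  have "jordan_nf y ((3, 0) # replicate (2 * r - 2) (1, 0))"
    unfolding jordan_nf_def lst using sim by auto
  then show ?thesis unfolding orbit_3_1_def y_def using mk_so by simp
qed


lemma G_orbit:
  assumes r1: "r \<ge> 1" and pp: "gg r P P = 0" and pq: "gg r P Q = 0" and qq: "gg r Q Q \<noteq> 0"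
    and j: "j < nat_dim r" "P j \<noteq> 0"
  shows "mk r P Q \<in> orbit_3_1 r"
proof (rule orbit_mk[OF r1])
  show "cc r P Q = 0" unfolding cc_def pp pq by simp
  have j': "2*r - j < nat_dim r" by (simp add: nat_dim_def)
  have jj: "2*r - (2*r - j) = j" using j(1) by (simp add: nat_dim_def)
  have "(mk r P Q * mk r P Q) $$ (2*r - j, j) = - gg r Q Q * P j * P j"
    unfolding mk_sq mk2_index[OF j' j(1)] jj pp pq gg_sym[of r Q P] by (simp add: algebra_simps)
  moreover have "- gg r Q Q * P j * P j \<noteq> 0" using qq j(2) by simp
  ultimately have ne: "(mk r P Q * mk r P Q) $$ (2*r - j, j) \<noteq> 0" by simp
  show "mk r P Q * mk r P Q \<noteq> 0\<^sub>m (nat_dim r) (nat_dim r)"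
  proof
    assume h: "mk r P Q * mk r P Q = 0\<^sub>m (nat_dim r) (nat_dim r)"
    have "(mk r P Q * mk r P Q) $$ (2*r - j, j) = 0" unfolding h using j' j(1) by simp
    then show False using ne by simp
  qed
qed

lemma decomp:
  assumes x: "x \<in> so_alg r" and pf: "\<And>a b c d. a < nat_dim r \<Longrightarrow> b < nat_dim r \<Longrightarrow> c < nat_dim r \<Longrightarrow> d < nat_dim r \<Longrightarrow> Pf r x a b c d = 0"
    and nz: "x \<noteq> 0\<^sub>m (nat_dim r) (nat_dim r)"
  shows "\<exists>P Q. x = mk r P Q"
proof -
  let ?n = "nat_dim r"
  have xc: "x \<in> carrier_mat ?n ?n" and skew: "\<And>a b. a < ?n \<Longrightarrow> b < ?n \<Longrightarrow> AA r x a b = - AA r x b a"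
    using x unfolding so_alg_iff by blast+
  have SSA: "SS r x a b = AA r x a b" if "a < ?n" "b < ?n" for a b
    unfolding SS_def using skew[OF that] by simp
  obtain i j where i: "i < ?n" and j: "j < ?n" and e: "x $$ (i,j) \<noteq> 0"
    using nz xc by (metis eq_matI carrier_matD index_zero_mat)
  define a where "a = 2*r - i"
  have a: "a < ?n" unfolding a_def by (simp add: nat_dim_def)
  have ii: "2*r - a = i" using i unfolding a_def by (simp add: nat_dim_def)
  have Aab: "AA r x a j \<noteq> 0" unfolding AA_def ii using e .
  define P where "P c = AA r x a c / AA r x a j" for c
  define Q where "Q d = AA r x j d" for d
  have "x = mk r P Q"
  proof (rule eq_matI)
    fix i' j' assume i': "i' < dim_row (mk r P Q)" and j': "j' < dim_col (mk r P Q)"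
    have i'': "i' < ?n" and j'': "j' < ?n" using i' j' by auto
    define k where "k = 2*r - i'"
    have k: "k < ?n" unfolding k_def by (simp add: nat_dim_def)
    have kk: "2*r - k = i'" using i'' unfolding k_def by (simp add: nat_dim_def)
    have "Pf r x a j k j' = 0" by (rule pf[OF a j k j''])
    then have "AA r x a j * AA r x k j' - AA r x a k * AA r x j j' + AA r x a j' * AA r x j k = 0"
      unfolding Pf_def SSA[OF a j] SSA[OF k j''] SSA[OF a k] SSA[OF j j''] SSA[OF a j''] SSA[OF j k] .
    then have "AA r x k j' = (AA r x a k * AA r x j j' - AA r x a j' * AA r x j k) / AA r x a j"
      using Aab by (simp add: field_simps)
    also have "\<dots> = P k * Q j' - Q k * P j'" unfolding P_def Q_def using Aab by (simp add: field_simps)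
    finally have "AA r x k j' = P k * Q j' - Q k * P j'" .
    moreover have "x $$ (i', j') = AA r x k j'" unfolding AA_def kk ..
    ultimately show "x $$ (i', j') = mk r P Q $$ (i', j')"
      unfolding mk2_index[OF i'' j''] k_def by simp
  qed (use xc in auto)
  then show ?thesis by blast
qed


lemma in_closure_self:
  assumes "x \<in> S" "x \<in> carrier_mat n n"
  shows "x \<in> mat_closure n S"
  unfolding mat_closure_def using assms by force

lemma sq_zero_gs:
  assumes s: "s < nat_dim r" and t: "t < nat_dim r" and D: "P s * Q t - Q s * P t \<noteq> 0"
    and sq: "mk r P Q * mk r P Q = 0\<^sub>m (nat_dim r) (nat_dim r)"
  shows "gg r P P = 0" "gg r P Q = 0" "gg r Q Q = 0"
proof -
  define \<alpha> where "\<alpha> j = gg r Q P * Q j - gg r Q Q * P j" for j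
  define \<beta> where "\<beta> j = gg r P P * Q j - gg r P Q * P j" for j
  have ent: "P (2*r - i) * \<alpha> j - Q (2*r - i) * \<beta> j = 0" if "i < nat_dim r" "j < nat_dim r" for i j
  proof -
    have "(mk r P Q * mk r P Q) $$ (i,j) = 0" unfolding sq using that by simp
    then show ?thesis unfolding mk_sq mk2_index[OF that] \<alpha>_def \<beta>_def .
  qed
  have s': "2*r - s < nat_dim r" and t': "2*r - t < nat_dim r" by (auto simp: nat_dim_def)
  have ss: "2*r - (2*r - s) = s" and tt: "2*r - (2*r - t) = t" using s t by (auto simp: nat_dim_def)
  have ab: "\<alpha> j = 0 \<and> \<beta> j = 0" if j: "j < nat_dim r" for j
  proof (rule lin2[of "P s" _ "- Q s" _ "P t" "- Q t"])
    show "P s * \<alpha> j + - Q s * \<beta> j = 0" using ent[OF s' j] unfolding ss by simp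
    show "P t * \<alpha> j + - Q t * \<beta> j = 0" using ent[OF t' j] unfolding tt by simp
    show "P s * - Q t - - Q s * P t \<noteq> 0" using D by (simp add: algebra_simps)
  qed
  have "gg r Q P = 0 \<and> - gg r Q Q = 0"
  proof (rule lin2[of "Q s" _ "P s" _ "Q t" "P t"])
    show "Q s * gg r Q P + P s * - gg r Q Q = 0" using ab[OF s] unfolding \<alpha>_def by (simp add: algebra_simps)
    show "Q t * gg r Q P + P t * - gg r Q Q = 0" using ab[OF t] unfolding \<alpha>_def by (simp add: algebra_simps)
    show "Q s * P t - P s * Q t \<noteq> 0" using D by (simp add: algebra_simps)
  qed
  then have g1: "gg r P Q = 0" and g2: "gg r Q Q = 0" using gg_sym[of r Q P] by auto
  show "gg r P Q = 0" "gg r Q Q = 0" using g1 g2 by auto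
  have "gg r P P * Q s = 0" "gg r P P * Q t = 0" using ab[OF s] ab[OF t] g1 unfolding \<beta>_def by auto
  moreover have "Q s \<noteq> 0 \<or> Q t \<noteq> 0" using D by auto
  ultimately show "gg r P P = 0" by auto
qed

lemma gg_add2: "gg r u (\<lambda>c. v c + k * z c) = gg r u v + k * gg r u z"
  unfolding gg_def by (simp add: sum.distrib sum_distrib_left algebra_simps)

lemma gg_two:
  assumes a: "a < nat_dim r" and b: "b < nat_dim r" and ab: "a \<noteq> b"
  shows "gg r u (\<lambda>c. if c = 2*r - a then \<mu> else if c = 2*r - b then \<nu> else 0) = u a * \<mu> + u b * \<nu>"
proof -
  have "gg r u (\<lambda>c. if c = 2*r - a then \<mu> else if c = 2*r - b then \<nu> else 0)
     = (\<Sum>c<nat_dim r. (if c = a then u a * \<mu> else 0) + (if c = b then u b * \<nu> else 0))"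
    unfolding gg_def
  proof (rule sum.cong[OF refl])
    fix c assume c: "c \<in> {..<nat_dim r}"
    have "2*r - c = 2*r - a \<longleftrightarrow> c = a" "2*r - c = 2*r - b \<longleftrightarrow> c = b"
      using c a b by (auto simp: nat_dim_def)
    then show "u c * (if 2*r - c = 2*r - a then \<mu> else if 2*r - c = 2*r - b then \<nu> else 0)
       = (if c = a then u a * \<mu> else 0) + (if c = b then u b * \<nu> else 0)" using ab by auto
  qed
  also have "\<dots> = u a * \<mu> + u b * \<nu>" using a b by (simp add: sum.distrib)
  finally show ?thesis .
qed


lemma closure_zero:
  assumes r1: "r \<ge> 1"
  shows "0\<^sub>m (nat_dim r) (nat_dim r) \<in> mat_closure (nat_dim r) (orbit_3_1 r)"
  unfolding mat_closure_def
proof (intro CollectI conjI allI impI)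
  fix \<epsilon> :: real assume e: "\<epsilon> > 0"
  define t where "t = complex_of_real (\<epsilon> / 4)"
  define P0 where "P0 k = (if k = 0 then t else 0)" for k :: nat
  define Q0 where "Q0 k = (if k = r then 1 else (0::complex))" for k :: nat
  have n0: "0 < nat_dim r" and nr: "r < nat_dim r" by (auto simp: nat_dim_def)
  have pp: "gg r P0 P0 = 0" unfolding gg_def
    by (rule sum.neutral) (use r1 in \<open>auto simp: P0_def\<close>)
  have pq: "gg r P0 Q0 = 0" unfolding gg_def
    by (rule sum.neutral) (use r1 in \<open>auto simp: P0_def Q0_def\<close>)
  have qq: "gg r Q0 Q0 = 1"
  proof -
    have "gg r Q0 Q0 = (\<Sum>c<nat_dim r. if c = r then 1 else 0)" unfolding gg_def
      by (rule sum.cong) (auto simp: Q0_def)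
    then show ?thesis using nr by simp
  qed
  have t0: "P0 0 \<noteq> 0" unfolding P0_def t_def using e by simp
  have orb: "mk r P0 Q0 \<in> orbit_3_1 r" by (rule G_orbit[OF r1 pp pq _ n0 t0]) (simp add: qq)
  have bP: "cmod (P0 k) \<le> \<epsilon> / 4" for k unfolding P0_def t_def using e by auto
  have bQ: "cmod (Q0 k) \<le> 1" for k unfolding Q0_def by auto
  have "\<forall>i<nat_dim r. \<forall>j<nat_dim r. cmod (0\<^sub>m (nat_dim r) (nat_dim r) $$ (i, j) - mk r P0 Q0 $$ (i, j)) < \<epsilon>"
  proof (intro allI impI)
    fix i j assume i: "i < nat_dim r" and j: "j < nat_dim r"
    have "cmod (0\<^sub>m (nat_dim r) (nat_dim r) $$ (i, j) - mk r P0 Q0 $$ (i, j))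
        = cmod (P0 (2*r - i) * Q0 j - Q0 (2*r - i) * P0 j)" using i j by (simp add: mk2_index norm_minus_commute)
    also have "\<dots> \<le> cmod (P0 (2*r - i)) * cmod (Q0 j) + cmod (Q0 (2*r - i)) * cmod (P0 j)"
      by (metis norm_mult norm_triangle_ineq4)
    also have "\<dots> \<le> \<epsilon> / 4 * 1 + 1 * (\<epsilon> / 4)"
      by (intro add_mono mult_mono bP bQ) (use e in auto)
    also have "\<dots> < \<epsilon>" using e by simp
    finally show "cmod (0\<^sub>m (nat_dim r) (nat_dim r) $$ (i, j) - mk r P0 Q0 $$ (i, j)) < \<epsilon>" .
  qed
  then show "\<exists>y\<in>orbit_3_1 r. \<forall>i<nat_dim r. \<forall>j<nat_dim r. cmod (0\<^sub>m (nat_dim r) (nat_dim r) $$ (i, j) - y $$ (i, j)) < \<epsilon>"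
    using orb by blast
qed simp


lemma closure_perturb:
  assumes r1: "r \<ge> 1" and s: "s < nat_dim r" and t: "t < nat_dim r"
    and D: "P s * Q t - Q s * P t \<noteq> 0"
    and pp: "gg r P P = 0" and pq: "gg r P Q = 0" and qq: "gg r Q Q = 0"
  shows "mk r P Q \<in> mat_closure (nat_dim r) (orbit_3_1 r)"
  unfolding mat_closure_def
proof (intro CollectI conjI allI impI)
  fix \<epsilon> :: real assume e: "\<epsilon> > 0"
  let ?n = "nat_dim r"
  define Dv where "Dv = P s * Q t - Q s * P t"
  have Dv: "Dv \<noteq> 0" using D unfolding Dv_def .
  have st: "s \<noteq> t" using D by auto
  define B where "B = 1 + (\<Sum>c<?n. cmod (P c))"
  have B1: "B \<ge> 1" unfolding B_def by (simp add: sum_nonneg)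
  have bP: "cmod (P c) \<le> B" if "c < ?n" for c
  proof -
    have "cmod (P c) \<le> (\<Sum>c<?n. cmod (P c))" by (rule member_le_sum) (use that in auto)
    then show ?thesis unfolding B_def by simp
  qed
  define z where "z c = (if c = 2*r - s then P t else if c = 2*r - t then - P s else 0)" for c
  have bz: "cmod (z c) \<le> B" for c unfolding z_def using bP[OF s] bP[OF t] B1 by auto
  define G where "G = gg r z z"
  define \<tau> where "\<tau> = min (\<epsilon> / (4 * B^2)) (cmod Dv / (cmod G + 1))"
  have Bpos: "B > 0" using B1 by simp
  have Gp: "cmod G + 1 > 0" by (simp add: add_nonneg_pos)
  then have tau_pos: "\<tau> > 0" unfolding \<tau>_def using e Bpos Dv by (simp add: divide_pos_pos)
  have tau1: "\<tau> * (2 * B^2) \<le> \<epsilon> / 2"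
  proof -
    have "\<tau> \<le> \<epsilon> / (4 * B^2)" unfolding \<tau>_def by simp
    then have "\<tau> * (2 * B^2) \<le> \<epsilon> / (4 * B^2) * (2 * B^2)" using Bpos by (intro mult_right_mono) auto
    also have "\<dots> = \<epsilon> / 2" using Bpos by (simp add: field_simps)
    finally show ?thesis .
  qed
  have tau2: "\<tau> * cmod G < 2 * cmod Dv"
  proof -
    have "\<tau> \<le> cmod Dv / (cmod G + 1)" unfolding \<tau>_def by simp
    then have "\<tau> * cmod G \<le> cmod Dv / (cmod G + 1) * cmod G" by (intro mult_right_mono) auto
    also have "\<dots> < cmod Dv / (cmod G + 1) * (cmod G + 1)"
      using Dv Gp by (intro mult_strict_left_mono) (auto simp: divide_pos_pos)
    also have "\<dots> = cmod Dv" using Gp by simp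
    also have "\<dots> < 2 * cmod Dv" using Dv by simp
    finally show ?thesis .
  qed
  define k where "k = complex_of_real \<tau>"
  define Q' where "Q' c = Q c + k * z c" for c
  have gPz: "gg r P z = 0" unfolding z_def gg_two[OF s t st] by (simp add: algebra_simps)
  have gQz: "gg r Q z = - Dv" unfolding z_def gg_two[OF s t st] Dv_def by (simp add: algebra_simps)
  have pq': "gg r P Q' = 0" unfolding Q'_def gg_add2 pq gPz by simp
  have qq': "gg r Q' Q' = k * (k * G - 2 * Dv)"
  proof -
    have Q'eq: "Q' = (\<lambda>c. Q c + k * z c)" unfolding Q'_def by simp
    have "gg r Q' Q' = gg r Q' (\<lambda>c. Q c + k * z c)" by (subst (2) Q'eq) (rule refl)
    also have "\<dots> = gg r Q' Q + k * gg r Q' z" by (rule gg_add2)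
    also have "gg r Q' Q = gg r Q Q' " by (rule gg_sym)
    also have "gg r Q Q' = gg r Q Q + k * gg r Q z" unfolding Q'eq by (rule gg_add2)
    also have "gg r Q' z = gg r z Q'" by (rule gg_sym)
    also have "gg r z Q' = gg r z Q + k * gg r z z" unfolding Q'eq by (rule gg_add2)
    finally show ?thesis unfolding qq gQz gg_sym[of r z Q] gQz G_def[symmetric] by (simp add: algebra_simps)
  qed
  have qq'nz: "gg r Q' Q' \<noteq> 0"
  proof -
    have k0: "k \<noteq> 0" unfolding k_def using tau_pos by simp
    have "cmod (k * G) < cmod (2 * Dv)" unfolding k_def using tau2 tau_pos
      by (simp add: norm_mult)
    then have "k * G - 2 * Dv \<noteq> 0" by auto
    then show ?thesis unfolding qq' using k0 by simp
  qed
  obtain j where j: "j < ?n" "P j \<noteq> 0"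
  proof (cases "P s = 0")
    case True then have "P t \<noteq> 0" using D by auto
    then show ?thesis using that t by blast
  next
    case False then show ?thesis using that s by blast
  qed
  have orb: "mk r P Q' \<in> orbit_3_1 r" by (rule G_orbit[OF r1 pp pq' qq'nz j])
  have "\<forall>i<?n. \<forall>j<?n. cmod (mk r P Q $$ (i, j) - mk r P Q' $$ (i, j)) < \<epsilon>"
  proof (intro allI impI)
    fix i j assume i: "i < ?n" and j: "j < ?n"
    have i': "2*r - i < ?n" by (simp add: nat_dim_def)
    have "mk r P Q $$ (i, j) - mk r P Q' $$ (i, j) = - k * (P (2*r - i) * z j - z (2*r - i) * P j)"
      using i j by (simp add: mk2_index Q'_def algebra_simps)
    then have "cmod (mk r P Q $$ (i, j) - mk r P Q' $$ (i, j)) = \<tau> * cmod (P (2*r - i) * z j - z (2*r - i) * P j)"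
      unfolding k_def using tau_pos by (simp add: norm_mult)
    also have "\<dots> \<le> \<tau> * (cmod (P (2*r - i)) * cmod (z j) + cmod (z (2*r - i)) * cmod (P j))"
      using tau_pos by (intro mult_left_mono) (auto simp: norm_mult[symmetric] norm_triangle_ineq4)
    also have "\<dots> \<le> \<tau> * (B * B + B * B)"
      using tau_pos bP[OF i'] bP[OF j] bz B1
      by (intro mult_left_mono add_mono mult_mono) auto
    also have "\<dots> = \<tau> * (2 * B^2)" by (simp add: power2_eq_square)
    also have "\<dots> < \<epsilon>" using tau1 e by linarith
    finally show "cmod (mk r P Q $$ (i, j) - mk r P Q' $$ (i, j)) < \<epsilon>" .
  qed
  then show "\<exists>y\<in>orbit_3_1 r. \<forall>i<?n. \<forall>j<?n. cmod (mk r P Q $$ (i, j) - y $$ (i, j)) < \<epsilon>"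
    using orb by blast
qed simp


theorem lemma7p2:
  fixes r :: nat
  assumes "r \<ge> 3"
  shows "zero_locus_W2 r \<inter> nilcone r \<subseteq> mat_closure (nat_dim r) (orbit_3_1 r)"
proof
  fix x assume x: "x \<in> zero_locus_W2 r \<inter> nilcone r"
  have r1: "r \<ge> 1" using assms by simp
  have xz: "x \<in> zero_locus_W2 r" and xn: "x \<in> nilcone r" using x by auto
  have xso: "x \<in> so_alg r" using xz unfolding zero_locus_W2_def by simp
  have xc: "x \<in> carrier_mat (nat_dim r) (nat_dim r)" using xso unfolding so_alg_def by simp
  obtain k where nil: "x ^\<^sub>m k = 0\<^sub>m (nat_dim r) (nat_dim r)" using xn unfolding nilcone_def by blast
  have pf: "\<And>a b c d. a < nat_dim r \<Longrightarrow> b < nat_dim r \<Longrightarrow> c < nat_dim r \<Longrightarrow> d < nat_dim r \<Longrightarrow> Pf r x a b c d = 0"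
    using Pf_vanish[OF assms xz] by blast
  show "x \<in> mat_closure (nat_dim r) (orbit_3_1 r)"
  proof (cases "x = 0\<^sub>m (nat_dim r) (nat_dim r)")
    case True then show ?thesis using closure_zero[OF r1] by simp
  next
    case nz: False
    obtain P Q where xPQ: "x = mk r P Q" using decomp[OF xso pf nz] by blast
    have c0: "cc r P Q = 0"
      by (rule nilp_c[OF xc _ nil nz]) (simp add: xPQ mk_cube)
    show ?thesis
    proof (cases "x * x = 0\<^sub>m (nat_dim r) (nat_dim r)")
      case False
      have "x \<in> orbit_3_1 r" unfolding xPQ by (rule orbit_mk[OF r1 c0]) (use False xPQ in simp)
      then show ?thesis using in_closure_self xc by blast
    next
      case True
      obtain i1 j1 where i1: "i1 < nat_dim r" and j1: "j1 < nat_dim r" and e: "x $$ (i1, j1) \<noteq> 0"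
        using nz xc by (metis eq_matI carrier_matD index_zero_mat)
      define s where "s = 2*r - i1"
      have s: "s < nat_dim r" unfolding s_def by (simp add: nat_dim_def)
      have D: "P s * Q j1 - Q s * P j1 \<noteq> 0" using e unfolding xPQ mk2_index[OF i1 j1] s_def .
      have sq: "mk r P Q * mk r P Q = 0\<^sub>m (nat_dim r) (nat_dim r)" using True xPQ by simp
      note g = sq_zero_gs[OF s j1 D sq]
      show ?thesis unfolding xPQ by (rule closure_perturb[OF r1 s j1 D g])
    qed
  qed
qed


end
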